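(* Let $k\in\mathbb{N}_0$, $n=2k+1$, $a<b$, $v\in\mathbb{R}$ constant, and $T>0$. For integers $N\ge1$ let $h=(b-a)/N$ and grid points $x_j=a+jh$. Consider the periodic advection equation $\phi_t+v\phi_x=0$ on $[a,b]$ with periodic boundary conditions and $(b-a)$-periodic initial condition $\phi_{IC}\in C^{k+1}$ (extended periodically). Define the jet scheme $\phi_0=\phi_{IC}$, $\phi_{m+1}=P_k^+(A\phi_m)$, where $(A\phi)(x)=\phi(x-v\Delta t)$ (periodic shift) and $P_k^+$ is the periodic piecewise degree-$n$ Hermite interpolation on the grid $\{x_j\}$ using derivatives up to order $k$ at grid points. Assume the time step satisfies $\Delta t\ge c\,h^{k+1}$ for a constant $c>0$ independent of $h$. Then there is a constant $M$, depending on $k,a,b,v,T,c,\phi_{IC}$ but not on $h$ (or $N$) or $m$, such that for all $m$ with $0\le m\Delta t\le T$: $$\|\phi_m^{(\ell)}\|_{L^\infty(a,b)}\le M\ \ (0\le\ell\le k),\qquad \|\phi_m^{(k+1)}\|_{L^2(a,b)}\le M.$$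
   Context: $f^{(\ell)}$ denotes the $\ell$-th derivative; for the piecewise polynomial $\phi_m$ (which is $C^k$ and periodic), $\phi_m^{(k+1)}$ is defined cellwise. The periodic Hermite interpolation $P_k^+g$ of a $(b-a)$-periodic $C^k$ function $g$ is the function which on each cell $[x_j,x_{j+1}]$ equals the polynomial of degree $\le n$ matching $g^{(\ell)}(x_j)$ and $g^{(\ell)}(x_{j+1})$ for $\ell=0,\dots,k$. *)

theory Defs
  imports "HOL-Analysis.Analysis" "HOL-Computational_Algebra.Polynomial"
begin

definition hermite_poly :: "nat \<Rightarrow> real \<Rightarrow> real \<Rightarrow> (nat \<Rightarrow> real) \<Rightarrow> (nat \<Rightarrow> real) \<Rightarrow> real poly" where
  "hermite_poly k x0 x1 ys0 ys1 =
     (THE p. degree p \<le> 2 * k + 1 \<and>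
        (\<forall>l\<le>k. poly ((pderiv ^^ l) p) x0 = ys0 l \<and> poly ((pderiv ^^ l) p) x1 = ys1 l))"

definition grid_pt :: "real \<Rightarrow> real \<Rightarrow> nat \<Rightarrow> int \<Rightarrow> real" where
  "grid_pt a b N j = a + of_int j * ((b - a) / real N)"

definition hermite_interp :: "nat \<Rightarrow> real \<Rightarrow> real \<Rightarrow> nat \<Rightarrow> (real \<Rightarrow> real) \<Rightarrow> real \<Rightarrow> real" where
  "hermite_interp k a b N g x =
     (let j = \<lfloor>(x - a) / ((b - a) / real N)\<rfloor>;
          xl = grid_pt a b N j; xr = grid_pt a b N (j + 1)
      in poly (hermite_poly k xl xr (\<lambda>l. (deriv ^^ l) g xl) (\<lambda>l. (deriv ^^ l) g xr)) x)"

primrec jet_scheme :: "nat \<Rightarrow> real \<Rightarrow> real \<Rightarrow> nat \<Rightarrow> real \<Rightarrow> real \<Rightarrow> (real \<Rightarrow> real) \<Rightarrow> nat \<Rightarrow> real \<Rightarrow> real" where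
  "jet_scheme k a b N v dt phiIC 0 = phiIC"
| "jet_scheme k a b N v dt phiIC (Suc m) =
     hermite_interp k a b N (\<lambda>x. jet_scheme k a b N v dt phiIC m (x - v * dt))"

end

theory Submission
  imports Defs "HOL-Computational_Algebra.Computational_Algebra" "HOL-Computational_Algebra.Field_as_Ring" "HOL-Analysis.Analysis"
begin

lemma higher_pderiv_diff: "(pderiv ^^ l) (p - q) = (pderiv ^^ l) p - (pderiv ^^ l) (q::real poly)"
  by (induction l) (simp_all add: pderiv_diff)

lemma higher_pderiv_add: "(pderiv ^^ l) (p + q) = (pderiv ^^ l) p + (pderiv ^^ l) (q::real poly)"
  by (induction l) (simp_all add: pderiv_add)

lemma dvd_imp_derivs_zero:
  assumes "[:-x,1:]^(Suc k) dvd (q::real poly)" "l \<le> k"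
  shows "poly ((pderiv ^^ l) q) x = 0"
proof -
  have "\<forall>l\<le>k. (pderiv ^^ l) q = 0 \<or> Suc k - l \<le> order x ((pderiv ^^ l) q)"
  proof (intro allI impI)
    fix l assume "l \<le> k" then show "(pderiv ^^ l) q = 0 \<or> Suc k - l \<le> order x ((pderiv ^^ l) q)"
    proof (induction l)
      case 0 then show ?case using assms(1) order_divides[of x "Suc k" q] by simp
    next
      case (Suc l)
      then have ih: "(pderiv ^^ l) q = 0 \<or> Suc k - l \<le> order x ((pderiv ^^ l) q)" by simp
      show ?case
      proof (cases "(pderiv ^^ l) q = 0")
        case True then show ?thesis by simp
      next
        case False
        with ih have o: "Suc k - l \<le> order x ((pderiv ^^ l) q)" by simp
        with Suc.prems have "order x ((pderiv ^^ l) q) \<noteq> 0" by simp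
        hence "poly ((pderiv ^^ l) q) x = 0" using order_root by blast
        from order_pderiv[OF False this] o Suc.prems show ?thesis by (simp add: Suc_diff_le)
      qed
    qed
  qed
  with assms(2) have "(pderiv ^^ l) q = 0 \<or> Suc k - l \<le> order x ((pderiv ^^ l) q)" by blast
  then show ?thesis
  proof
    assume "Suc k - l \<le> order x ((pderiv ^^ l) q)"
    with assms(2) have "order x ((pderiv ^^ l) q) \<noteq> 0" by simp
    then show ?thesis using order_root by blast
  qed simp
qed

lemma derivs_zero_imp_dvd:
  assumes "\<forall>l\<le>k. poly ((pderiv ^^ l) (q::real poly)) x = 0"
  shows "[:-x,1:]^(Suc k) dvd q"
  using assms
proof (induction k arbitrary: q)
  case 0 then show ?case by (simp add: poly_eq_0_iff_dvd)
next
  case (Suc k)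
  have "\<forall>l\<le>k. poly ((pderiv ^^ l) (pderiv q)) x = 0"
    using Suc.prems by (metis Suc_le_mono funpow_Suc_right o_apply)
  from Suc.IH[OF this] have d: "pderiv q = 0 \<or> Suc k \<le> order x (pderiv q)"
    by (metis order_divides)
  have r: "poly q x = 0" using Suc.prems by (metis funpow_0 le0)
  show ?case
  proof (cases "q = 0")
    case True then show ?thesis by simp
  next
    case False
    have "pderiv q \<noteq> 0"
    proof
      assume "pderiv q = 0"
      then have "degree q = 0" by (simp add: pderiv_eq_0_iff)
      then obtain c where "q = [:c:]" by (metis degree_eq_zeroE)
      with r False show False by simp
    qed
    with d have "Suc k \<le> order x (pderiv q)" by simp
    with order_pderiv[OF False r] have "Suc (Suc k) \<le> order x q" by simp
    then show ?thesis by (metis order_divides)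
  qed
qed

lemma derivs_zero_iff_dvd:
  "(\<forall>l\<le>k. poly ((pderiv ^^ l) (q::real poly)) x = 0) \<longleftrightarrow> [:-x,1:]^(Suc k) dvd q"
  using derivs_zero_imp_dvd dvd_imp_derivs_zero by blast

lemma hermite_unique0:
  assumes "x0 \<noteq> x1" "degree (q::real poly) \<le> 2*k+1"
    "\<forall>l\<le>k. poly ((pderiv ^^ l) q) x0 = 0" "\<forall>l\<le>k. poly ((pderiv ^^ l) q) x1 = 0"
  shows "q = 0"
proof (rule ccontr)
  assume q: "q \<noteq> 0"
  from derivs_zero_imp_dvd[OF assms(3)] obtain r where r: "q = [:-x0,1:]^(Suc k) * r" by (auto elim: dvdE)
  with q have r0: "r \<noteq> 0" by auto
  from derivs_zero_imp_dvd[OF assms(4)] q have o1: "Suc k \<le> order x1 q" by (metis order_divides)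
  have "poly ([:-x0,1:]^(Suc k)) x1 \<noteq> 0" using assms(1) by simp
  hence "order x1 ([:-x0,1:]^(Suc k)) = 0" by (rule order_0I)
  with o1 order_mult[of "[:-x0,1:]^(Suc k)" r x1] q r have "Suc k \<le> order x1 r" by simp
  hence "[:-x1,1:]^(Suc k) dvd r" by (metis order_divides)
  hence "Suc k \<le> degree r" using dvd_imp_degree_le[OF _ r0] by (metis degree_linear_power)
  moreover have "degree q = Suc k + degree r" using r r0 by (simp add: degree_mult_eq degree_linear_power del: power_Suc)
  ultimately show False using assms(2) by simp
qed

lemma higher_pderiv_pcompose_lin:
  "(pderiv ^^ l) (pcompose p [:c,1::real:]) = pcompose ((pderiv ^^ l) p) [:c,1:]"
  by (induction l) (simp_all add: pderiv_pcompose pderiv_pCons)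

definition taylor_poly :: "nat \<Rightarrow> real \<Rightarrow> (nat \<Rightarrow> real) \<Rightarrow> real poly" where
  "taylor_poly k x ys = pcompose (\<Sum>i\<le>k. monom (ys i / fact i) i) [:-x,1:]"

lemma taylor_poly_degree: "degree (taylor_poly k x ys) \<le> k"
proof -
  have "degree (\<Sum>i\<le>k. monom (ys i / fact i) i) \<le> k"
    by (rule degree_sum_le) (auto intro: order_trans[OF degree_monom_le])
  then show ?thesis unfolding taylor_poly_def using degree_pcompose_le[of "(\<Sum>i\<le>k. monom (ys i / fact i) i)" "[:-x,1:]"]
    by simp
qed

lemma taylor_poly_derivs:
  assumes "l \<le> k" shows "poly ((pderiv ^^ l) (taylor_poly k x ys)) x = ys l"
proof -
  let ?P = "(\<Sum>i\<le>k. monom (ys i / fact i) i)"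
  have "poly ((pderiv ^^ l) (taylor_poly k x ys)) x = poly ((pderiv ^^ l) ?P) 0"
    unfolding taylor_poly_def higher_pderiv_pcompose_lin by (simp add: poly_pcompose)
  also have "\<dots> = coeff ((pderiv ^^ l) ?P) 0" by (simp add: poly_0_coeff_0)
  also have "\<dots> = pochhammer 1 l * coeff ?P l" by (simp add: coeff_higher_pderiv)
  also have "coeff ?P l = ys l / fact l" using assms by (simp add: coeff_sum)
  finally show ?thesis by (simp add: pochhammer_fact[symmetric])
qed

lemma hermite_exists:
  assumes "x0 \<noteq> (x1::real)"
  shows "\<exists>p. degree p \<le> 2*k+1 \<and> (\<forall>l\<le>k. poly ((pderiv ^^ l) p) x0 = ys0 l \<and> poly ((pderiv ^^ l) p) x1 = ys1 l)"
proof -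
  define A0 where "A0 = taylor_poly k x0 ys0"
  define A1 where "A1 = taylor_poly k x1 ys1"
  define W where "W = [:-x0,1:]^(Suc k)"
  define Q where "Q = [:-x1,1:]^(Suc k)"
  have cop0: "coprime [:-x0,1:] [:-x1,1::real:]"
  proof (rule coprimeI)
    fix c assume c: "c dvd [:-x0,1:]" "c dvd [:-x1,1::real:]"
    then have "c dvd [:-x0,1:] - [:-x1,1:]" by (rule dvd_diff)
    moreover have "[:-x0,1:] - [:-x1,1:] = [:x1 - x0:]" by simp
    ultimately have cd: "c dvd [:x1-x0:]" by simp
    have nz: "[:x1 - x0:] \<noteq> 0" using assms by simp
    from cd nz have "c \<noteq> 0" by auto
    moreover from dvd_imp_degree_le[OF cd nz] have "degree c = 0" by simp
    ultimately show "is_unit c" by (simp add: is_unit_iff_degree)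
  qed
  have c1: "coprime ([:-x0,1:]^Suc k) [:-x1,1::real:]" by (rule coprime_power_left_iff[THEN iffD2, OF disjI1[OF cop0]])
  have "coprime W Q" unfolding W_def Q_def by (rule coprime_power_right_iff[THEN iffD2, OF disjI1[OF c1]])
  hence "gcd W Q = 1" by (rule coprime_imp_gcd_eq_1)
  then obtain u t where ut: "u * W + t * Q = 1"
    using bezout_coefficients_fst_snd[of W Q] by auto
  define r where "r = ((A1 - A0) * u) mod Q"
  define p where "p = A0 + W * r"
  have Q0: "Q \<noteq> 0" unfolding Q_def by (simp del: power_Suc)
  have degr: "degree r \<le> k"
  proof (cases "r = 0")
    case False
    then have "degree r < degree Q" unfolding r_def using degree_mod_less'[OF Q0] by simp
    then show ?thesis unfolding Q_def by (simp add: degree_linear_power del: power_Suc)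
  qed simp
  have "degree (W * r) \<le> 2*k+1"
    using degree_mult_le[of W r] degr unfolding W_def by (simp add: degree_linear_power del: power_Suc)
  moreover have "degree A0 \<le> 2*k+1" unfolding A0_def using taylor_poly_degree[of k x0 ys0] by simp
  ultimately have degp: "degree p \<le> 2*k+1" unfolding p_def by (rule degree_add_le[rotated])
  have d0: "[:-x0,1:]^(Suc k) dvd p - A0" unfolding p_def W_def by simp
  have "p - A1 = Q * ((A0 - A1) * t - W * ((A1 - A0) * u div Q))"
  proof -
    have e: "(A1 - A0) * u = Q * ((A1 - A0) * u div Q) + r" unfolding r_def by simp
    have "p - A1 = (A0 - A1) * (u * W + t * Q) + W * r" unfolding p_def using ut by simp
    also have "\<dots> = (A0 - A1) * t * Q - W * ((A1 - A0) * u) + W * r"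
      by (simp add: algebra_simps)
    also have "\<dots> = (A0 - A1) * t * Q - W * (Q * ((A1 - A0) * u div Q) + r) + W * r"
      using e by simp
    also have "\<dots> = Q * ((A0 - A1) * t - W * ((A1 - A0) * u div Q))"
      by (simp add: algebra_simps)
    finally show ?thesis .
  qed
  hence d1: "[:-x1,1:]^(Suc k) dvd p - A1" unfolding Q_def by simp
  show ?thesis
  proof (intro exI[of _ p] conjI allI impI)
    show "degree p \<le> 2*k+1" by (rule degp)
  next
    fix l assume l: "l \<le> k"
    from dvd_imp_derivs_zero[OF d0 l] have "poly ((pderiv ^^ l) p) x0 = poly ((pderiv ^^ l) A0) x0"
      by (simp add: higher_pderiv_diff)
    then show "poly ((pderiv ^^ l) p) x0 = ys0 l" using taylor_poly_derivs[OF l] unfolding A0_def by simp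
  next
    fix l assume l: "l \<le> k"
    from dvd_imp_derivs_zero[OF d1 l] have "poly ((pderiv ^^ l) p) x1 = poly ((pderiv ^^ l) A1) x1"
      by (simp add: higher_pderiv_diff)
    then show "poly ((pderiv ^^ l) p) x1 = ys1 l" using taylor_poly_derivs[OF l] unfolding A1_def by simp
  qed
qed

lemma hermite_poly_props:
  assumes "x0 \<noteq> (x1::real)"
  shows "degree (hermite_poly k x0 x1 ys0 ys1) \<le> 2*k+1 \<and>
     (\<forall>l\<le>k. poly ((pderiv ^^ l) (hermite_poly k x0 x1 ys0 ys1)) x0 = ys0 l \<and>
        poly ((pderiv ^^ l) (hermite_poly k x0 x1 ys0 ys1)) x1 = ys1 l)"
  unfolding hermite_poly_def
proof (rule theI')
  from hermite_exists[OF assms] obtain p where p: "degree p \<le> 2*k+1 \<and> (\<forall>l\<le>k. poly ((pderiv ^^ l) p) x0 = ys0 l \<and> poly ((pderiv ^^ l) p) x1 = ys1 l)" by blast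
  show "\<exists>!p. degree p \<le> 2*k+1 \<and> (\<forall>l\<le>k. poly ((pderiv ^^ l) p) x0 = ys0 l \<and> poly ((pderiv ^^ l) p) x1 = ys1 l)"
  proof (rule ex1I[of _ p])
    fix q assume q: "degree q \<le> 2*k+1 \<and> (\<forall>l\<le>k. poly ((pderiv ^^ l) q) x0 = ys0 l \<and> poly ((pderiv ^^ l) q) x1 = ys1 l)"
    have "q - p = 0"
      by (rule hermite_unique0[OF assms, of _ k]) (use p q in \<open>auto simp: higher_pderiv_diff intro: degree_diff_le\<close>)
    then show "q = p" by simp
  qed (rule p)
qed

lemma hermite_poly_unique:
  assumes "x0 \<noteq> (x1::real)" "degree q \<le> 2*k+1"
    "\<forall>l\<le>k. poly ((pderiv ^^ l) q) x0 = ys0 l \<and> poly ((pderiv ^^ l) q) x1 = ys1 l"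
  shows "hermite_poly k x0 x1 ys0 ys1 = q"
proof -
  let ?p = "hermite_poly k x0 x1 ys0 ys1"
  have p: "degree ?p \<le> 2*k+1 \<and> (\<forall>l\<le>k. poly ((pderiv ^^ l) ?p) x0 = ys0 l \<and> poly ((pderiv ^^ l) ?p) x1 = ys1 l)"
    by (rule hermite_poly_props[OF assms(1)])
  have "?p - q = 0"
    by (rule hermite_unique0[OF assms(1), of _ k]) (use p assms in \<open>auto simp: higher_pderiv_diff intro: degree_diff_le\<close>)
  then show ?thesis by simp
qed


lemma deriv_shift_eq: "deriv (\<lambda>x. f (x + t)) y = deriv f (y + (t::real))"
  unfolding deriv_def using DERIV_shift[of f _ y t] by simp

lemma higher_deriv_shift: "(deriv ^^ l) (\<lambda>x. f (x + t)) = (\<lambda>x. (deriv ^^ l) f (x + (t::real)))"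
proof (induction l)
  case 0 then show ?case by simp
next
  case (Suc l)
  show ?case by (rule ext) (simp add: Suc deriv_shift_eq)
qed

lemma higher_deriv_shift_minus: "(deriv ^^ l) (\<lambda>x. f (x - s)) = (\<lambda>x. (deriv ^^ l) f (x - (s::real)))"
  using higher_deriv_shift[of l f "-s"] by simp

lemma periodic_higher_deriv:
  assumes "\<forall>x. f (x + L) = (f x::real)"
  shows "(deriv ^^ l) f (x + L) = (deriv ^^ l) f x"
proof -
  have "(\<lambda>x. f (x + L)) = f" using assms by auto
  then have "(deriv ^^ l) f = (\<lambda>x. (deriv ^^ l) f (x + L))" using higher_deriv_shift[of l f L] by simp
  then show ?thesis by (metis)
qed

definition cellwise :: "real \<Rightarrow> real \<Rightarrow> (real \<Rightarrow> real) \<Rightarrow> bool" where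
  "cellwise \<sigma> h u \<longleftrightarrow> (\<forall>j::int. \<exists>q. continuous_on {\<sigma> + real_of_int j*h .. \<sigma> + (real_of_int j+1)*h} q \<and>
      (\<forall>x\<in>{\<sigma> + real_of_int j*h <..< \<sigma> + (real_of_int j+1)*h}. u x = q x))"

lemma cellwise_cont: "continuous_on UNIV u \<Longrightarrow> cellwise \<sigma> h u"
  unfolding cellwise_def by (auto intro: continuous_on_subset)

lemma cellwise_add: "cellwise \<sigma> h u \<Longrightarrow> cellwise \<sigma> h w \<Longrightarrow> cellwise \<sigma> h (\<lambda>x. u x + w x)"
  unfolding cellwise_def
proof (intro allI)
  fix j :: int
  assume u: "\<forall>j::int. \<exists>q. continuous_on {\<sigma> + real_of_int j*h .. \<sigma> + (real_of_int j+1)*h} q \<and> (\<forall>x\<in>{\<sigma> + real_of_int j*h <..< \<sigma> + (real_of_int j+1)*h}. u x = q x)"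
    and w: "\<forall>j::int. \<exists>q. continuous_on {\<sigma> + real_of_int j*h .. \<sigma> + (real_of_int j+1)*h} q \<and> (\<forall>x\<in>{\<sigma> + real_of_int j*h <..< \<sigma> + (real_of_int j+1)*h}. w x = q x)"
  from u obtain q1 where q1: "continuous_on {\<sigma> + real_of_int j*h .. \<sigma> + (real_of_int j+1)*h} q1" "\<forall>x\<in>{\<sigma> + real_of_int j*h <..< \<sigma> + (real_of_int j+1)*h}. u x = q1 x" by blast
  from w obtain q2 where q2: "continuous_on {\<sigma> + real_of_int j*h .. \<sigma> + (real_of_int j+1)*h} q2" "\<forall>x\<in>{\<sigma> + real_of_int j*h <..< \<sigma> + (real_of_int j+1)*h}. w x = q2 x" by blast
  show "\<exists>q. continuous_on {\<sigma> + real_of_int j*h .. \<sigma> + (real_of_int j+1)*h} q \<and> (\<forall>x\<in>{\<sigma> + real_of_int j*h <..< \<sigma> + (real_of_int j+1)*h}. u x + w x = q x)"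
    by (rule exI[of _ "\<lambda>x. q1 x + q2 x"]) (use q1 q2 in \<open>auto intro: continuous_intros\<close>)
qed

lemma cellwise_mult: "cellwise \<sigma> h u \<Longrightarrow> cellwise \<sigma> h w \<Longrightarrow> cellwise \<sigma> h (\<lambda>x. u x * w x)"
  unfolding cellwise_def
proof (intro allI)
  fix j :: int
  assume u: "\<forall>j::int. \<exists>q. continuous_on {\<sigma> + real_of_int j*h .. \<sigma> + (real_of_int j+1)*h} q \<and> (\<forall>x\<in>{\<sigma> + real_of_int j*h <..< \<sigma> + (real_of_int j+1)*h}. u x = q x)"
    and w: "\<forall>j::int. \<exists>q. continuous_on {\<sigma> + real_of_int j*h .. \<sigma> + (real_of_int j+1)*h} q \<and> (\<forall>x\<in>{\<sigma> + real_of_int j*h <..< \<sigma> + (real_of_int j+1)*h}. w x = q x)"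
  from u obtain q1 where q1: "continuous_on {\<sigma> + real_of_int j*h .. \<sigma> + (real_of_int j+1)*h} q1" "\<forall>x\<in>{\<sigma> + real_of_int j*h <..< \<sigma> + (real_of_int j+1)*h}. u x = q1 x" by blast
  from w obtain q2 where q2: "continuous_on {\<sigma> + real_of_int j*h .. \<sigma> + (real_of_int j+1)*h} q2" "\<forall>x\<in>{\<sigma> + real_of_int j*h <..< \<sigma> + (real_of_int j+1)*h}. w x = q2 x" by blast
  show "\<exists>q. continuous_on {\<sigma> + real_of_int j*h .. \<sigma> + (real_of_int j+1)*h} q \<and> (\<forall>x\<in>{\<sigma> + real_of_int j*h <..< \<sigma> + (real_of_int j+1)*h}. u x * w x = q x)"
    by (rule exI[of _ "\<lambda>x. q1 x * q2 x"]) (use q1 q2 in \<open>auto intro: continuous_intros\<close>)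
qed

lemma cellwise_minus: "cellwise \<sigma> h u \<Longrightarrow> cellwise \<sigma> h w \<Longrightarrow> cellwise \<sigma> h (\<lambda>x. u x - w x)"
proof -
  assume "cellwise \<sigma> h u" "cellwise \<sigma> h w"
  moreover have "cellwise \<sigma> h (\<lambda>x. -1)" by (rule cellwise_cont) simp
  ultimately have "cellwise \<sigma> h (\<lambda>x. u x + (-1) * w x)" by (intro cellwise_add cellwise_mult)
  then show ?thesis by simp
qed

lemma cellwise_shift:
  assumes "cellwise \<sigma> h u"
  shows "cellwise (\<sigma> + s) h (\<lambda>x. u (x - s))"
  unfolding cellwise_def
proof
  fix j :: int
  from assms obtain q where q: "continuous_on {\<sigma> + real_of_int j*h .. \<sigma> + (real_of_int j+1)*h} q" "\<forall>x\<in>{\<sigma> + real_of_int j*h <..< \<sigma> + (real_of_int j+1)*h}. u x = q x"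
    unfolding cellwise_def by blast
  have "continuous_on {\<sigma> + s + real_of_int j*h .. \<sigma> + s + (real_of_int j+1)*h} (\<lambda>x. q (x - s))"
    by (rule continuous_on_compose2[OF q(1)]) (auto intro: continuous_intros)
  moreover have "\<forall>x\<in>{\<sigma> + s + real_of_int j*h <..< \<sigma> + s + (real_of_int j+1)*h}. u (x - s) = q (x - s)"
    using q(2) by auto
  ultimately show "\<exists>q. continuous_on {\<sigma> + s + real_of_int j*h .. \<sigma> + s + (real_of_int j+1)*h} q \<and>
      (\<forall>x\<in>{\<sigma> + s + real_of_int j*h <..< \<sigma> + s + (real_of_int j+1)*h}. u (x - s) = q x)" by blast
qed

lemma cellwise_integrable:
  assumes h: "h > 0" and cw: "cellwise \<sigma> h u"
  shows "u integrable_on {c..d}"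
proof -
  have cell: "u integrable_on {\<sigma> + real_of_int j*h .. \<sigma> + (real_of_int j+1)*h}" for j :: int
  proof -
    from cw obtain q where q: "continuous_on {\<sigma> + real_of_int j*h .. \<sigma> + (real_of_int j+1)*h} q" "\<forall>x\<in>{\<sigma> + real_of_int j*h <..< \<sigma> + (real_of_int j+1)*h}. u x = q x"
      unfolding cellwise_def by blast
    show ?thesis
      by (rule integrable_spike_finite[of "{\<sigma> + real_of_int j*h, \<sigma> + (real_of_int j+1)*h}" _ _ q])
        (use q in \<open>auto intro: integrable_continuous_interval\<close>)
  qed
  have big: "u integrable_on {\<sigma> + i*h .. \<sigma> + (i + int n)*h}" for i :: int and n :: nat
  proof (induction n)
    case 0 then show ?case using integrable_on_refl[of u "\<sigma> + real_of_int i*h"] by simp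
  next
    case (Suc n)
    have "u integrable_on {\<sigma> + real_of_int (i + int n)*h .. \<sigma> + (real_of_int (i + int n)+1)*h}" by (rule cell)
    then show ?case
      by (intro Henstock_Kurzweil_Integration.integrable_combine[OF _ _ Suc.IH]) (use h in \<open>auto simp: algebra_simps\<close>)
  qed
  show ?thesis
  proof (cases "c \<le> d")
    case False then show ?thesis using Henstock_Kurzweil_Integration.integrable_on_empty by simp
  next
    case True
    define i where "i = \<lfloor>(c - \<sigma>)/h\<rfloor>"
    define n where "n = nat (\<lceil>(d - \<sigma>)/h\<rceil> - i)"
    have "real_of_int i \<le> (c - \<sigma>)/h" unfolding i_def by simp
    hence c1: "\<sigma> + i*h \<le> c" using h by (simp add: field_simps)
    have "(d - \<sigma>)/h \<le> real_of_int \<lceil>(d - \<sigma>)/h\<rceil>" by simp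
    moreover have "\<lceil>(d - \<sigma>)/h\<rceil> \<ge> i" unfolding i_def using True h
      by (meson ceiling_mono divide_right_mono diff_right_mono floor_le_ceiling order_trans less_imp_le)
    ultimately have "(d - \<sigma>)/h \<le> real_of_int (i + int n)" unfolding n_def by simp
    hence d1: "d \<le> \<sigma> + (i + int n)*h" using h by (simp add: field_simps)
    show ?thesis by (rule integrable_on_subinterval[OF big[of i n]]) (use c1 d1 in auto)
  qed
qed

lemma finite_grid_points:
  fixes c d \<sigma> h :: real
  assumes "h > 0"
  shows "finite {x \<in> {c..d}. \<exists>i::int. x = \<sigma> + i*h}"
proof -
  have "{x \<in> {c..d}. \<exists>i::int. x = \<sigma> + i*h} \<subseteq> (\<lambda>i. \<sigma> + real_of_int i*h) ` {\<lfloor>(c - \<sigma>)/h\<rfloor> .. \<lceil>(d - \<sigma>)/h\<rceil>}"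
  proof
    fix x assume "x \<in> {x \<in> {c..d}. \<exists>i::int. x = \<sigma> + i*h}"
    then obtain i :: int where x: "x = \<sigma> + i*h" "c \<le> x" "x \<le> d" by auto
    have "(c - \<sigma>)/h \<le> i" using x assms by (simp add: field_simps)
    hence "\<lfloor>(c - \<sigma>)/h\<rfloor> \<le> i" by linarith
    moreover have "i \<le> (d - \<sigma>)/h" using x assms by (simp add: field_simps)
    hence "i \<le> \<lceil>(d - \<sigma>)/h\<rceil>" by linarith
    ultimately show "x \<in> (\<lambda>i. \<sigma> + real_of_int i*h) ` {\<lfloor>(c - \<sigma>)/h\<rfloor> .. \<lceil>(d - \<sigma>)/h\<rceil>}" using x by auto
  qed
  then show ?thesis by (rule finite_subset) simp
qed

lemma periodic_integral:
  fixes w :: "real \<Rightarrow> real" and L c d :: real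
  assumes L: "L > 0" and per: "\<forall>x. w (x + L) = (w x::real)" and int: "\<And>c d. w integrable_on {c..d}"
  shows "integral {c..c+L} w = integral {d..d+L} w"
proof -
  define G where "G x = integral {x..x+L} w" for x :: real
  have sh: "integral {x+L..y+L} w = integral {x..y} w" for x y
  proof -
    have "w \<circ> (+) L = w" using per by (auto simp: add.commute)
    then show ?thesis using integral_shift_Icc_real[where a=x and b=y and f=w and c=L] by simp
  qed
  have loc: "G x = G y" if "x \<le> y" "y \<le> x + L" for x y
  proof -
    have "G x = integral {x..y} w + integral {y..x+L} w" unfolding G_def
      using Henstock_Kurzweil_Integration.integral_combine[of x y "x+L" w] that int by simp
    moreover have "G y = integral {y..x+L} w + integral {x+L..y+L} w" unfolding G_def
      using Henstock_Kurzweil_Integration.integral_combine[of y "x+L" "y+L" w] that int by simp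
    ultimately show ?thesis using sh by simp
  qed
  have step: "\<forall>x y. \<bar>y - x\<bar> \<le> real n * L \<longrightarrow> G x = G y" for n :: nat
  proof (induction n)
    case 0 then show ?case by simp
  next
    case (Suc n)
    show ?case
    proof (intro allI impI)
      fix x y assume xy: "\<bar>y - x\<bar> \<le> real (Suc n) * L"
      have xy': "y - x \<le> real n * L + L" "x - y \<le> real n * L + L"
        using xy by (simp_all add: abs_le_iff algebra_simps)
      show "G x = G y"
      proof (cases "\<bar>y - x\<bar> \<le> L")
        case True
        show ?thesis
        proof (cases "x \<le> y")
          case True
          with \<open>\<bar>y - x\<bar> \<le> L\<close> have "y \<le> x + L" by linarith
          with True show ?thesis by (rule loc)
        next
          case False
          with \<open>\<bar>y - x\<bar> \<le> L\<close> have "x \<le> y + L" by linarith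
          with False have "G y = G x" by (intro loc) auto
          then show ?thesis by simp
        qed
      next
        case False
        show ?thesis
        proof (cases "x \<le> y")
          case True
          have e1: "G x = G (x + L)" by (rule loc) (use L in auto)
          have "\<bar>y - (x + L)\<bar> \<le> real n * L" using xy' True False L by (simp add: abs_le_iff)
          then have e2: "G (x + L) = G y" using Suc.IH by blast
          from e1 e2 show ?thesis by simp
        next
          case f2: False
          have e1: "G (x - L) = G x" by (rule loc) (use L in auto)
          have "\<bar>y - (x - L)\<bar> \<le> real n * L" using xy' f2 False L by (simp add: abs_le_iff)
          then have e2: "G (x - L) = G y" using Suc.IH by blast
          from e1 e2 show ?thesis by simp
        qed
      qed
    qed
  qed
  obtain n :: nat where "\<bar>d - c\<bar> / L \<le> n" using real_arch_simple by blast
  hence "\<bar>d - c\<bar> \<le> real n * L" using L by (simp add: field_simps)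
  then show ?thesis using step[of n] unfolding G_def by blast
qed

lemma deriv_combine:
  fixes F :: "real \<Rightarrow> real"
  assumes "(F has_real_derivative D) (at x within {c..x})" "(F has_real_derivative D) (at x within {x..d})"
    and "c < x" "x < d"
  shows "(F has_real_derivative D) (at x)"
proof -
  have "((\<lambda>y. (F y - F x) / (y - x)) \<longlongrightarrow> D) (sup (at x within {c..x}) (at x within {x..d}))"
    using assms(1,2) unfolding has_field_derivative_iff by (rule filterlim_sup)
  also have "sup (at x within {c..x}) (at x within {x..d}) = at x within {c..d}"
    by (metis at_within_union ivl_disj_un_two_touch(4) assms(3,4) less_imp_le)
  also have "\<dots> = at x" using assms(3,4) by (rule at_within_Icc_at)
  finally show ?thesis unfolding has_field_derivative_iff .
qed

lemma abs_le_sq: "\<bar>u::real\<bar> \<le> (u^2 + 1)/2"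
proof -
  have "0 \<le> (\<bar>u\<bar> - 1)^2" by simp
  then show ?thesis by (simp add: power2_eq_square algebra_simps)
qed

lemma integral_abs_le_sq:
  fixes u :: "real \<Rightarrow> real"
  assumes "(u has_integral I) {c..d}" "(\<lambda>x. (u x)^2) integrable_on {c..d}" "c \<le> d"
  shows "\<bar>I\<bar> \<le> integral {c..d} (\<lambda>x. ((u x)^2 + 1)/2)"
proof -
  have i2: "(\<lambda>x. ((u x)^2 + 1)/2) integrable_on {c..d}"
    using integrable_add[OF assms(2) integrable_const_ivl[of 1 c d]] by (rule integrable_on_divide)
  have "I \<le> integral {c..d} (\<lambda>x. ((u x)^2 + 1)/2)"
    using has_integral_le[OF assms(1) integrable_integral[OF i2]] abs_le_sq by (meson abs_ge_self order_trans)
  moreover have "-I \<le> integral {c..d} (\<lambda>x. ((u x)^2 + 1)/2)"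
    using has_integral_le[OF has_integral_neg[OF assms(1)] integrable_integral[OF i2]] abs_le_sq
    by (meson abs_ge_minus_self order_trans)
  ultimately show ?thesis by linarith
qed


locale grid =
  fixes a b :: real and N k :: nat
  assumes ab: "a < b" and N: "N \<ge> 1"
begin

definition h :: real where "h = (b - a) / real N"

lemma h_pos: "h > 0" using ab N unfolding h_def by simp

lemma Nh: "real N * h = b - a" using N unfolding h_def by simp

lemma grid_pt_eq: "grid_pt a b N j = a + real_of_int j * h"
  unfolding grid_pt_def h_def by simp

definition good :: "real \<Rightarrow> (real \<Rightarrow> real) \<Rightarrow> bool" where
  "good \<sigma> f \<longleftrightarrow> (\<forall>x. f (x + (b - a)) = f x) \<and>
     (\<forall>l<k. \<forall>x. ((deriv ^^ l) f has_real_derivative (deriv ^^ Suc l) f x) (at x)) \<and>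
     continuous_on UNIV ((deriv ^^ k) f) \<and>
     (\<forall>x. (\<forall>i::int. x \<noteq> \<sigma> + real_of_int i * h) \<longrightarrow> ((deriv ^^ k) f has_real_derivative (deriv ^^ Suc k) f x) (at x)) \<and>
     cellwise \<sigma> h ((deriv ^^ Suc k) f)"

definition E :: "(real \<Rightarrow> real) \<Rightarrow> real" where
  "E f = integral {a..b} (\<lambda>x. ((deriv ^^ Suc k) f x)^2)"

lemma good_cont:
  assumes "good \<sigma> f" "l \<le> k"
  shows "continuous_on UNIV ((deriv ^^ l) f)"
proof (cases "l < k")
  case True
  with assms have "\<forall>x. ((deriv ^^ l) f has_real_derivative (deriv ^^ Suc l) f x) (at x)"
    unfolding good_def by blast
  then show ?thesis by (meson DERIV_isCont continuous_at_imp_continuous_on)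
next
  case False
  with assms have "l = k" by simp
  with assms show ?thesis unfolding good_def by blast
qed

lemma good_sq_int:
  assumes "good \<sigma> f"
  shows "(\<lambda>x. ((deriv ^^ Suc k) f x)^2) integrable_on {c..d}"
proof -
  have cw: "cellwise \<sigma> h ((deriv ^^ Suc k) f)" using assms unfolding good_def by blast
  have "cellwise \<sigma> h (\<lambda>x. (deriv ^^ Suc k) f x * (deriv ^^ Suc k) f x)"
    by (rule cellwise_mult[OF cw cw])
  then show ?thesis using cellwise_integrable[OF h_pos] by (simp add: power2_eq_square)
qed

lemma E_nonneg: "good \<sigma> f \<Longrightarrow> E f \<ge> 0"
  unfolding E_def by (rule integral_nonneg[OF good_sq_int]) auto

lemma good_periodic_deriv: "good \<sigma> f \<Longrightarrow> (deriv ^^ l) f (x + (b - a)) = (deriv ^^ l) f x"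
  by (rule periodic_higher_deriv) (auto simp: good_def)

lemma good_shift:
  assumes g: "good \<sigma> f"
  shows "good (\<sigma> + s) (\<lambda>x. f (x - s))"
proof -
  have D: "(deriv ^^ l) (\<lambda>x. f (x - s)) = (\<lambda>x. (deriv ^^ l) f (x - s))" for l
    by (rule higher_deriv_shift_minus)
  have sh: "((\<lambda>x. F (x - s)) has_real_derivative D') (at x)" if "(F has_real_derivative D') (at (x - s))" for F D' x
    using that DERIV_shift[of F D' x "-s"] by simp
  have p: "\<forall>x. f (x + (b - a) - s) = f (x - s)" using g unfolding good_def by (metis add_diff_eq diff_add_eq)
  have d1: "\<forall>l<k. \<forall>x. ((deriv ^^ l) (\<lambda>x. f (x - s)) has_real_derivative (deriv ^^ Suc l) (\<lambda>x. f (x - s)) x) (at x)"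
    unfolding D using g unfolding good_def by (auto intro!: sh)
  have c1: "continuous_on UNIV ((deriv ^^ k) (\<lambda>x. f (x - s)))"
    unfolding D using g unfolding good_def
    by (auto intro!: continuous_on_compose2[of UNIV "(deriv ^^ k) f"] continuous_intros)
  have d2: "\<forall>x. (\<forall>i::int. x \<noteq> \<sigma> + s + real_of_int i * h) \<longrightarrow> ((deriv ^^ k) (\<lambda>x. f (x - s)) has_real_derivative (deriv ^^ Suc k) (\<lambda>x. f (x - s)) x) (at x)"
  proof (intro allI impI)
    fix x assume "\<forall>i::int. x \<noteq> \<sigma> + s + real_of_int i * h"
    then have "\<forall>i::int. x - s \<noteq> \<sigma> + real_of_int i * h" by (auto simp: algebra_simps)
    with g have "((deriv ^^ k) f has_real_derivative (deriv ^^ Suc k) f (x - s)) (at (x - s))"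
      unfolding good_def by blast
    then show "((deriv ^^ k) (\<lambda>x. f (x - s)) has_real_derivative (deriv ^^ Suc k) (\<lambda>x. f (x - s)) x) (at x)"
      unfolding D by (rule sh)
  qed
  have cw: "cellwise (\<sigma> + s) h ((deriv ^^ Suc k) (\<lambda>x. f (x - s)))"
    unfolding D using g unfolding good_def by (auto intro: cellwise_shift)
  show ?thesis unfolding good_def using p d1 c1 d2 cw by simp
qed

lemma integral_shift_periodic:
  fixes w :: "real \<Rightarrow> real"
  assumes per: "\<forall>x. w (x + (b - a)) = w x" and int: "\<And>c d. w integrable_on {c..d}"
  shows "integral {a..b} (\<lambda>x. w (x - s)) = integral {a..b} w"
proof -
  have "integral {a..b} (\<lambda>x. w (x - s)) = integral {a..b} (w \<circ> (+) (-s))"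
    by (simp add: o_def)
  also have "\<dots> = integral {a + -s..b + -s} w" by (rule integral_shift_Icc_real)
  also have "\<dots> = integral {(a - s)..(a - s) + (b - a)} w" by simp
  also have "\<dots> = integral {a..a + (b - a)} w"
    by (rule periodic_integral) (use ab per int in auto)
  finally show ?thesis by simp
qed

lemma E_shift:
  assumes g: "good \<sigma> f"
  shows "E (\<lambda>x. f (x - s)) = E f"
proof -
  have "E (\<lambda>x. f (x - s)) = integral {a..b} (\<lambda>x. ((deriv ^^ Suc k) f (x - s))^2)"
    unfolding E_def higher_deriv_shift_minus ..
  also have "\<dots> = E f" unfolding E_def
    by (rule integral_shift_periodic[where w="\<lambda>x. ((deriv ^^ Suc k) f x)^2"])
      (simp only: good_periodic_deriv[OF g] simp_thms, rule good_sq_int[OF g])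
  finally show ?thesis .
qed

lemma int_shift:
  assumes g: "good \<sigma> f"
  shows "integral {a..b} (\<lambda>x. f (x - s)) = integral {a..b} f"
proof (rule integral_shift_periodic)
  show "\<forall>x. f (x + (b - a)) = f x" using g unfolding good_def by blast
  have "continuous_on UNIV f" using good_cont[OF g, of 0] by simp
  then show "f integrable_on {c..d}" for c d
    by (meson continuous_on_subset integrable_continuous_interval subset_UNIV)
qed

end

context grid begin

definition hp :: "(real \<Rightarrow> real) \<Rightarrow> int \<Rightarrow> real poly" where
  "hp g j = hermite_poly k (a + real_of_int j * h) (a + real_of_int (j+1) * h)
      (\<lambda>l. (deriv ^^ l) g (a + real_of_int j * h)) (\<lambda>l. (deriv ^^ l) g (a + real_of_int (j+1) * h))"

definition cidx :: "real \<Rightarrow> int" where "cidx x = \<lfloor>(x - a) / h\<rfloor>"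

definition Q :: "(real \<Rightarrow> real) \<Rightarrow> nat \<Rightarrow> real \<Rightarrow> real" where
  "Q g l x = poly ((pderiv ^^ l) (hp g (cidx x))) x"

lemma interp_eq: "hermite_interp k a b N g = Q g 0"
  unfolding hermite_interp_def Q_def hp_def cidx_def grid_pt_eq Let_def
  by (simp add: h_def)

lemma HP:
  "degree (hp g j) \<le> 2*k+1 \<and>
   (\<forall>l\<le>k. poly ((pderiv ^^ l) (hp g j)) (a + real_of_int j * h) = (deriv ^^ l) g (a + real_of_int j * h) \<and>
      poly ((pderiv ^^ l) (hp g j)) (a + real_of_int (j+1) * h) = (deriv ^^ l) g (a + real_of_int (j+1) * h))"
  unfolding hp_def by (rule hermite_poly_props) (use h_pos in simp)

lemma cidx_eq:
  assumes "a + real_of_int j * h \<le> x" "x < a + real_of_int (j+1) * h"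
  shows "cidx x = j"
proof -
  have "real_of_int j \<le> (x - a)/h" using assms h_pos by (simp add: field_simps)
  moreover have "(x - a)/h < real_of_int j + 1" using assms h_pos by (simp add: field_simps)
  ultimately show ?thesis unfolding cidx_def by (simp add: floor_eq_iff)
qed

lemma cidx_bounds: "a + real_of_int (cidx x) * h \<le> x" "x < a + real_of_int (cidx x + 1) * h"
proof -
  have "real_of_int (cidx x) \<le> (x - a)/h" unfolding cidx_def by simp
  then show "a + real_of_int (cidx x) * h \<le> x" using h_pos by (simp add: field_simps)
  have "(x - a)/h < real_of_int (cidx x) + 1" unfolding cidx_def by linarith
  then show "x < a + real_of_int (cidx x + 1) * h" using h_pos by (simp add: field_simps)
qed

lemma E1:
  assumes "l \<le> k" "a + real_of_int j * h \<le> x" "x \<le> a + real_of_int (j+1) * h"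
  shows "Q g l x = poly ((pderiv ^^ l) (hp g j)) x"
proof (cases "x < a + real_of_int (j+1) * h")
  case True
  then show ?thesis unfolding Q_def using cidx_eq[OF assms(2) True] by simp
next
  case False
  with assms have x: "x = a + real_of_int (j+1) * h" by simp
  have c: "cidx x = j + 1"
    by (rule cidx_eq) (use x h_pos in auto)
  have "Q g l x = poly ((pderiv ^^ l) (hp g (j+1))) (a + real_of_int (j+1) * h)"
    unfolding Q_def c by (simp add: x)
  also have "\<dots> = (deriv ^^ l) g (a + real_of_int (j+1) * h)" using HP[of g "j+1"] assms(1) by simp
  also have "\<dots> = poly ((pderiv ^^ l) (hp g j)) x" using HP[of g j] assms(1) x by simp
  finally show ?thesis .
qed

lemma DER_within:
  assumes "\<forall>y\<in>{c..d}. F y = poly q y" "x \<in> {c..d}"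
  shows "(F has_real_derivative poly (pderiv q) x) (at x within {c..d})"
proof -
  have "(poly q has_real_derivative poly (pderiv q) x) (at x within {c..d})"
    using poly_DERIV[of q x] by (rule has_field_derivative_at_within)
  then show ?thesis
    by (rule has_field_derivative_transform_within[of _ _ _ _ 1]) (use assms in auto)
qed

lemma E2:
  assumes "l < k"
  shows "(Q g l has_real_derivative Q g (Suc l) x) (at x)"
proof -
  define j where "j = cidx x"
  have b1: "a + real_of_int j * h \<le> x" and b2: "x < a + real_of_int (j+1) * h"
    unfolding j_def by (rule cidx_bounds)+
  have w1: "(Q g l has_real_derivative Q g (Suc l) x) (at x within {a + real_of_int j * h .. a + real_of_int (j+1) * h})"
  proof -
    have "(Q g l has_real_derivative poly (pderiv ((pderiv ^^ l) (hp g j))) x) (at x within {a + real_of_int j * h .. a + real_of_int (j+1) * h})"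
      by (rule DER_within) (use E1[of l j _ g] assms b1 b2 in auto)
    moreover have "poly (pderiv ((pderiv ^^ l) (hp g j))) x = Q g (Suc l) x"
      using E1[of "Suc l" j x g] assms b1 b2 by simp
    ultimately show ?thesis by simp
  qed
  show ?thesis
  proof (cases "x = a + real_of_int j * h")
    case False
    with b1 have "a + real_of_int j * h < x" by simp
    with b2 have "at x within {a + real_of_int j * h .. a + real_of_int (j+1) * h} = at x"
      by (intro at_within_Icc_at)
    with w1 show ?thesis by simp
  next
    case True
    have w0: "(Q g l has_real_derivative Q g (Suc l) x) (at x within {a + real_of_int (j - 1) * h .. x})"
    proof -
      have e: "a + real_of_int (j - 1 + 1) * h = x" using True by simp
      have "(Q g l has_real_derivative poly (pderiv ((pderiv ^^ l) (hp g (j-1)))) x) (at x within {a + real_of_int (j - 1) * h .. x})"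
        by (rule DER_within) (use E1[of l "j-1" _ g] assms e h_pos True in auto)
      moreover have "poly (pderiv ((pderiv ^^ l) (hp g (j-1)))) x = Q g (Suc l) x"
        using E1[of "Suc l" "j-1" x g] assms e h_pos True by simp
      ultimately show ?thesis by simp
    qed
    show ?thesis
      by (rule deriv_combine[OF w0]) (use w1 True h_pos b2 in \<open>auto simp: algebra_simps\<close>)
  qed
qed

lemma E3: "continuous_on UNIV (Q g k)"
proof -
  have cc: "continuous_on {a + real_of_int j * h .. a + real_of_int (j+1) * h} (Q g k)" for j
  proof -
    have "continuous_on {a + real_of_int j * h .. a + real_of_int (j+1) * h} (\<lambda>x. poly ((pderiv ^^ k) (hp g j)) x)"
      by (intro continuous_intros)
    then show ?thesis by (rule continuous_on_eq) (use E1[of k j _ g] in auto)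
  qed
  have "isCont (Q g k) x" for x
  proof -
    define j where "j = cidx x"
    have b1: "a + real_of_int j * h \<le> x" and b2: "x < a + real_of_int (j+1) * h"
      unfolding j_def by (rule cidx_bounds)+
    have "continuous_on ({a + real_of_int (j-1) * h .. a + real_of_int (j - 1 + 1) * h} \<union> {a + real_of_int j * h .. a + real_of_int (j+1) * h}) (Q g k)"
      by (rule continuous_on_closed_Un[OF _ _ cc cc]) auto
    moreover have "{a + real_of_int (j-1) * h .. a + real_of_int (j - 1 + 1) * h} \<union> {a + real_of_int j * h .. a + real_of_int (j+1) * h}
        = {a + real_of_int (j-1) * h .. a + real_of_int (j+1) * h}"
      using h_pos by (auto simp: algebra_simps)
    moreover have "x \<in> interior {a + real_of_int (j-1) * h .. a + real_of_int (j+1) * h}"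
      using b1 b2 h_pos by (auto simp: algebra_simps)
    ultimately show ?thesis by (metis continuous_on_interior)
  qed
  then show ?thesis by (simp add: continuous_at_imp_continuous_on)
qed

lemma E4:
  assumes "\<forall>i::int. x \<noteq> a + real_of_int i * h"
  shows "(Q g k has_real_derivative poly ((pderiv ^^ Suc k) (hp g (cidx x))) x) (at x)"
proof -
  define j where "j = cidx x"
  have b1: "a + real_of_int j * h \<le> x" and b2: "x < a + real_of_int (j+1) * h"
    unfolding j_def by (rule cidx_bounds)+
  with assms have b1': "a + real_of_int j * h < x" by (metis order_le_less)
  have "(Q g k has_real_derivative poly (pderiv ((pderiv ^^ k) (hp g j))) x) (at x)"
    by (rule has_field_derivative_transform_within_open[OF poly_DERIV[of "(pderiv ^^ k) (hp g j)" x], where S="{a + real_of_int j * h <..< a + real_of_int (j+1) * h}"])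
      (use b1' b2 E1[of k j _ g] in auto)
  then show ?thesis unfolding j_def by simp
qed

lemma E5: "l \<le> k \<Longrightarrow> (deriv ^^ l) (hermite_interp k a b N g) = Q g l"
proof (induction l)
  case 0 then show ?case by (simp add: interp_eq)
next
  case (Suc l)
  then have "(deriv ^^ l) (hermite_interp k a b N g) = Q g l" by simp
  then have "(deriv ^^ Suc l) (hermite_interp k a b N g) = deriv (Q g l)" by simp
  also have "\<dots> = Q g (Suc l)"
    by (rule ext, rule DERIV_imp_deriv, rule E2) (use Suc.prems in simp)
  finally show ?case .
qed

lemma E6:
  assumes "\<forall>i::int. x \<noteq> a + real_of_int i * h"
  shows "(deriv ^^ Suc k) (hermite_interp k a b N g) x = poly ((pderiv ^^ Suc k) (hp g (cidx x))) x"
  using E5[of k g] DERIV_imp_deriv[OF E4[OF assms, of g]] by simp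

lemma hp_periodic:
  assumes g: "good \<sigma> g"
  shows "hp g (j + int N) = pcompose (hp g j) [:-(b-a),1:]"
proof -
  have xs: "a + real_of_int (j + int N) * h = a + real_of_int j * h + (b - a)" "a + real_of_int (j + int N + 1) * h = a + real_of_int (j+1) * h + (b - a)"
    using Nh by (simp_all add: algebra_simps)
  show ?thesis unfolding hp_def[of g "j + int N"]
  proof (rule hermite_poly_unique)
    show "a + real_of_int (j + int N) * h \<noteq> a + real_of_int (j + int N + 1) * h" using h_pos by simp
    show "degree (pcompose (hp g j) [:-(b-a),1:]) \<le> 2*k+1" using HP[of g j] by (simp add: degree_pcompose)
    show "\<forall>l\<le>k. poly ((pderiv ^^ l) (pcompose (hp g j) [:-(b-a),1:])) (a + real_of_int (j + int N) * h) =
          (deriv ^^ l) g (a + real_of_int (j + int N) * h) \<and>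
        poly ((pderiv ^^ l) (pcompose (hp g j) [:-(b-a),1:])) (a + real_of_int (j + int N + 1) * h) =
          (deriv ^^ l) g (a + real_of_int (j + int N + 1) * h)"
      unfolding xs higher_pderiv_pcompose_lin poly_pcompose good_periodic_deriv[OF g]
      using HP[of g j] by simp
  qed
qed

lemma interp_periodic:
  assumes g: "good \<sigma> g"
  shows "hermite_interp k a b N g (x + (b - a)) = hermite_interp k a b N g x"
proof -
  have "(x + (b - a) - a)/h = (x - a)/h + real N" using Nh h_pos by (simp add: field_simps)
  then have c: "cidx (x + (b - a)) = cidx x + int N" unfolding cidx_def
    by (metis floor_add_int of_int_of_nat_eq)
  show ?thesis unfolding interp_eq Q_def c hp_periodic[OF g] by (simp add: poly_pcompose)
qed

lemma good_interp:
  assumes g: "good \<sigma> g"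
  shows "good a (hermite_interp k a b N g)"
  unfolding good_def
proof (intro conjI allI impI)
  show "hermite_interp k a b N g (x + (b - a)) = hermite_interp k a b N g x" for x
    by (rule interp_periodic[OF g])
  show "((deriv ^^ l) (hermite_interp k a b N g) has_real_derivative (deriv ^^ Suc l) (hermite_interp k a b N g) x) (at x)"
    if "l < k" for l x
    using E5[of l g] E5[of "Suc l" g] E2[OF that, of g x] that by simp
  show "continuous_on UNIV ((deriv ^^ k) (hermite_interp k a b N g))"
    using E5[of k g] E3[of g] by simp
  show "((deriv ^^ k) (hermite_interp k a b N g) has_real_derivative (deriv ^^ Suc k) (hermite_interp k a b N g) x) (at x)"
    if "\<forall>i::int. x \<noteq> a + real_of_int i * h" for x
    using E5[of k g] E4[OF that, of g] E6[OF that, of g] by simp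
  show "cellwise a h ((deriv ^^ Suc k) (hermite_interp k a b N g))"
    unfolding cellwise_def
  proof
    fix j :: int
    have "\<forall>x\<in>{a + real_of_int j * h <..< a + (real_of_int j + 1) * h}.
        (deriv ^^ Suc k) (hermite_interp k a b N g) x = poly ((pderiv ^^ Suc k) (hp g j)) x"
    proof
      fix x assume x: "x \<in> {a + real_of_int j * h <..< a + (real_of_int j + 1) * h}"
      have ng: "\<forall>i::int. x \<noteq> a + real_of_int i * h"
      proof
        fix i :: int
        show "x \<noteq> a + real_of_int i * h"
        proof
          assume xi: "x = a + real_of_int i * h"
          with x h_pos have r1: "real_of_int j < real_of_int i" and r2: "real_of_int i < real_of_int j + 1"
            by (simp_all add: mult_less_cancel_right)
          from r1 have "j < i" by simp
          moreover from r2 have "i < j + 1" using of_int_less_iff[of i "j+1"] by simp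
          ultimately show False by linarith
        qed
      qed
      have "cidx x = j" by (rule cidx_eq) (use x in auto)
      with E6[OF ng, of g] show "(deriv ^^ Suc k) (hermite_interp k a b N g) x = poly ((pderiv ^^ Suc k) (hp g j)) x"
        by simp
    qed
    moreover have "continuous_on {a + real_of_int j * h .. a + (real_of_int j + 1) * h} (\<lambda>x. poly ((pderiv ^^ Suc k) (hp g j)) x)"
      by (intro continuous_intros)
    ultimately show "\<exists>q. continuous_on {a + real_of_int j * h .. a + (real_of_int j + 1) * h} q \<and>
      (\<forall>x\<in>{a + real_of_int j * h <..< a + (real_of_int j + 1) * h}. (deriv ^^ Suc k) (hermite_interp k a b N g) x = q x)"
      by blast
  qed
qed

end

lemma telescope:
  fixes \<alpha> \<beta> \<gamma> :: "nat \<Rightarrow> real"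
  assumes "\<forall>i. \<gamma> (Suc i) = \<beta> i"
  shows "(\<Sum>i\<le>n. (-1)^i * (\<alpha> (Suc i) * \<beta> i + \<alpha> i * \<gamma> i)) = \<alpha> 0 * \<gamma> 0 + (-1)^n * \<alpha> (Suc n) * \<beta> n"
  by (induction n) (simp_all add: assms algebra_simps)

lemma pderiv_high_zero:
  assumes "degree (p::real poly) < n"
  shows "(pderiv ^^ n) p = 0"
proof (rule poly_eqI)
  fix i
  have "coeff p (i + n) = 0" using assms by (intro coeff_eq_0) simp
  then show "coeff ((pderiv ^^ n) p) i = coeff 0 i" by (simp add: coeff_higher_pderiv)
qed

context grid begin

lemma open_cell:
  assumes "y \<in> {a + real_of_int j * h <..< a + real_of_int (j+1) * h}"
  shows "\<forall>i::int. y \<noteq> a + real_of_int i * h" "cidx y = j"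
proof -
  show "\<forall>i::int. y \<noteq> a + real_of_int i * h"
  proof
    fix i :: int
    show "y \<noteq> a + real_of_int i * h"
    proof
      assume xi: "y = a + real_of_int i * h"
      with assms h_pos have r1: "real_of_int j < real_of_int i" and r2: "real_of_int i < real_of_int j + 1"
        by (simp_all add: mult_less_cancel_right)
      from r1 have "j < i" by simp
      moreover from r2 have "i < j + 1" using of_int_less_iff[of i "j+1"] by simp
      ultimately show False by linarith
    qed
  qed
  show "cidx y = j" by (rule cidx_eq) (use assms in auto)
qed

context
  fixes \<sigma> g assumes gg: "good \<sigma> g"
begin

definition cc :: "int \<Rightarrow> nat \<Rightarrow> real \<Rightarrow> real" where
  "cc j l y = (deriv ^^ l) g y - poly ((pderiv ^^ l) (hp g j)) y"

lemma cc_end: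
  assumes "l \<le> k"
  shows "cc j l (a + real_of_int j * h) = 0" "cc j l (a + real_of_int (j+1) * h) = 0"
  using HP[of g j] assms unfolding cc_def by auto

lemma cc_der:
  assumes "l < k"
  shows "(cc j l has_real_derivative cc j (Suc l) y) (at y)"
proof -
  have "((deriv ^^ l) g has_real_derivative (deriv ^^ Suc l) g y) (at y)"
    using gg assms unfolding good_def by blast
  moreover have "((\<lambda>y. poly ((pderiv ^^ l) (hp g j)) y) has_real_derivative poly ((pderiv ^^ Suc l) (hp g j)) y) (at y)"
    using poly_DERIV[of "(pderiv ^^ l) (hp g j)" y] by simp
  ultimately show ?thesis unfolding cc_def[abs_def] by (rule DERIV_diff)
qed

lemma cc_der_k:
  assumes "\<forall>i::int. y \<noteq> \<sigma> + real_of_int i * h"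
  shows "(cc j k has_real_derivative cc j (Suc k) y) (at y)"
proof -
  have "((deriv ^^ k) g has_real_derivative (deriv ^^ Suc k) g y) (at y)"
    using gg assms unfolding good_def by blast
  moreover have "((\<lambda>y. poly ((pderiv ^^ k) (hp g j)) y) has_real_derivative poly ((pderiv ^^ Suc k) (hp g j)) y) (at y)"
    using poly_DERIV[of "(pderiv ^^ k) (hp g j)" y] by simp
  ultimately show ?thesis unfolding cc_def[abs_def] by (rule DERIV_diff)
qed

lemma cc_cont: "l \<le> k \<Longrightarrow> continuous_on S (cc j l)"
  unfolding cc_def[abs_def]
  by (intro continuous_intros continuous_on_subset[OF good_cont[OF gg]]) auto

lemma cc_cellwise: "cellwise \<sigma> h (cc j (Suc k))"
proof -
  have c1: "cellwise \<sigma> h ((deriv ^^ Suc k) g)" using gg unfolding good_def by blast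
  have c2: "cellwise \<sigma> h (\<lambda>y. poly ((pderiv ^^ Suc k) (hp g j)) y)" by (rule cellwise_cont) (intro continuous_intros)
  show ?thesis unfolding cc_def[abs_def] by (rule cellwise_minus[OF c1 c2])
qed

lemma cc_sq_int: "(\<lambda>y. (cc j (Suc k) y)^2) integrable_on {c..d}"
proof -
  have "cellwise \<sigma> h (\<lambda>y. cc j (Suc k) y * cc j (Suc k) y)" by (rule cellwise_mult[OF cc_cellwise cc_cellwise])
  then show ?thesis using cellwise_integrable[OF h_pos] by (simp add: power2_eq_square)
qed

lemma cc_ftc:
  assumes "c \<le> d"
  shows "(cc j (Suc k) has_integral (cc j k d - cc j k c)) {c..d}"
proof (rule fundamental_theorem_of_calculus_interior_strong[of "{y \<in> {c..d}. \<exists>i::int. y = \<sigma> + real_of_int i * h}"])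
  show "finite {y \<in> {c..d}. \<exists>i::int. y = \<sigma> + real_of_int i * h}" by (rule finite_grid_points[OF h_pos])
  show "c \<le> d" by fact
  show "continuous_on {c..d} (cc j k)" by (rule cc_cont) simp
  fix y assume "y \<in> {c<..<d} - {y \<in> {c..d}. \<exists>i::int. y = \<sigma> + real_of_int i * h}"
  then have "\<forall>i::int. y \<noteq> \<sigma> + real_of_int i * h" by auto
  then show "(cc j k has_vector_derivative cc j (Suc k) y) (at y)"
    using cc_der_k has_real_derivative_iff_has_vector_derivative by blast
qed

lemma ortho:
  "((\<lambda>y. poly ((pderiv ^^ Suc k) (hp g j)) y * cc j (Suc k) y) has_integral 0)
     {a + real_of_int j * h .. a + real_of_int (j+1) * h}"
proof -
  define x0 where "x0 = a + real_of_int j * h"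
  define x1 where "x1 = a + real_of_int (j+1) * h"
  have x01: "x0 \<le> x1" unfolding x0_def x1_def using h_pos by simp
  define A where "A i y = poly ((pderiv ^^ (Suc k + i)) (hp g j)) y" for i y
  define F where "F y = (\<Sum>i\<le>k. (-1)^i * A i y * cc j (k - i) y)" for y
  have degp: "degree (hp g j) < Suc k + Suc k" using HP[of g j] by simp
  have DA: "(A i has_real_derivative A (Suc i) y) (at y)" for i y
    unfolding A_def[abs_def] using poly_DERIV[of "(pderiv ^^ (Suc k + i)) (hp g j)" y] by simp
  have dcc: "(cc j (k - i) has_real_derivative cc j (Suc k - i) y) (at y)"
    if "i \<le> k" "\<forall>i::int. y \<noteq> \<sigma> + real_of_int i * h" for i y
  proof (cases "i = 0")
    case True then show ?thesis using cc_der_k[OF that(2)] by simp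
  next
    case False
    then have "k - i < k" "Suc (k - i) = Suc k - i" using that(1) by auto
    then show ?thesis using cc_der[of "k - i" j y] by simp
  qed
  have DF: "(F has_real_derivative poly ((pderiv ^^ Suc k) (hp g j)) y * cc j (Suc k) y) (at y)"
    if "\<forall>i::int. y \<noteq> \<sigma> + real_of_int i * h" for y
  proof -
    have "(F has_real_derivative (\<Sum>i\<le>k. (-1)^i * (A (Suc i) y * cc j (k - i) y + A i y * cc j (Suc k - i) y))) (at y)"
      unfolding F_def[abs_def]
    proof (rule DERIV_sum)
      fix i assume "i \<in> {..k}"
      then have dc: "(cc j (k - i) has_real_derivative cc j (Suc k - i) y) (at y)" using dcc that by simp
      have "((\<lambda>y. (-1)^i * (A i y * cc j (k - i) y)) has_real_derivative
          (-1)^i * (A (Suc i) y * cc j (k - i) y + cc j (Suc k - i) y * A i y)) (at y)"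
        by (rule DERIV_cmult[OF DERIV_mult[OF DA dc]])
      moreover have fe: "(\<lambda>y. (-1)^i * A i y * cc j (k - i) y) = (\<lambda>y. (-1)^i * (A i y * cc j (k - i) y))"
        by (simp add: mult.assoc)
      moreover have ve: "cc j (Suc k - i) y * A i y = A i y * cc j (Suc k - i) y" by (rule mult.commute)
      ultimately show "((\<lambda>y. (-1)^i * A i y * cc j (k - i) y) has_real_derivative
          (-1)^i * (A (Suc i) y * cc j (k - i) y + A i y * cc j (Suc k - i) y)) (at y)"
        by simp
    qed
    also have "(\<Sum>i\<le>k. (-1)^i * (A (Suc i) y * cc j (k - i) y + A i y * cc j (Suc k - i) y)) =
        A 0 y * cc j (Suc k - 0) y + (-1)^k * A (Suc k) y * cc j (k - k) y"
      by (rule telescope[where \<alpha>="\<lambda>i. A i y" and \<beta>="\<lambda>i. cc j (k - i) y" and \<gamma>="\<lambda>i. cc j (Suc k - i) y"]) simp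
    also have "A (Suc k) y = 0" unfolding A_def using pderiv_high_zero[OF degp] by simp
    finally show ?thesis unfolding A_def by simp
  qed
  have contF: "continuous_on {x0..x1} F"
    unfolding F_def[abs_def] A_def by (intro continuous_intros cc_cont) auto
  have F0: "F x0 = 0" "F x1 = 0"
    unfolding F_def x0_def x1_def using cc_end by auto
  have "((\<lambda>y. poly ((pderiv ^^ Suc k) (hp g j)) y * cc j (Suc k) y) has_integral (F x1 - F x0)) {x0..x1}"
  proof (rule fundamental_theorem_of_calculus_interior_strong[of "{y \<in> {x0..x1}. \<exists>i::int. y = \<sigma> + real_of_int i * h}"])
    show "finite {y \<in> {x0..x1}. \<exists>i::int. y = \<sigma> + real_of_int i * h}" by (rule finite_grid_points[OF h_pos])
    fix y assume "y \<in> {x0<..<x1} - {y \<in> {x0..x1}. \<exists>i::int. y = \<sigma> + real_of_int i * h}"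
    then have "\<forall>i::int. y \<noteq> \<sigma> + real_of_int i * h" by auto
    then show "(F has_vector_derivative poly ((pderiv ^^ Suc k) (hp g j)) y * cc j (Suc k) y) (at y)"
      using DF has_real_derivative_iff_has_vector_derivative by blast
  qed (use x01 contF in auto)
  then show ?thesis using F0 unfolding x0_def x1_def by simp
qed

lemma cell:
  fixes j :: int
  defines "x0 \<equiv> a + real_of_int j * h" and "x1 \<equiv> a + real_of_int (j+1) * h"
  shows "integral {x0..x1} (\<lambda>y. ((deriv ^^ Suc k) (hermite_interp k a b N g) y)^2) \<le> integral {x0..x1} (\<lambda>y. ((deriv ^^ Suc k) g y)^2)"
    and "\<bar>integral {x0..x1} (hermite_interp k a b N g) - integral {x0..x1} g\<bar> \<le> h^(Suc k) * (integral {x0..x1} (\<lambda>y. ((deriv ^^ Suc k) g y)^2) + h)/2"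
proof -
  have x1: "x1 = x0 + h" unfolding x0_def x1_def by (simp add: algebra_simps)
  have x01: "x0 \<le> x1" using h_pos x1 by simp
  have cI: "Henstock_Kurzweil_Integration.content {x0..x1} = h" using x01 x1 by simp
  define d where "d y = poly ((pderiv ^^ Suc k) (hp g j)) y" for y
  define G where "G y = (deriv ^^ Suc k) g y" for y
  define c where "c y = cc j (Suc k) y" for y
  have cGd: "c y = G y - d y" for y unfolding c_def cc_def G_def d_def ..
  define iG2 where "iG2 = integral {x0..x1} (\<lambda>y. (G y)^2)"
  define iD2 where "iD2 = integral {x0..x1} (\<lambda>y. (d y)^2)"
  define iC2 where "iC2 = integral {x0..x1} (\<lambda>y. (c y)^2)"
  have hG: "((\<lambda>y. (G y)^2) has_integral iG2) {x0..x1}"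
    unfolding iG2_def G_def by (rule integrable_integral[OF good_sq_int[OF gg]])
  have hD: "((\<lambda>y. (d y)^2) has_integral iD2) {x0..x1}"
    unfolding iD2_def d_def by (rule integrable_integral, rule integrable_continuous_interval) (intro continuous_intros)
  have hC: "((\<lambda>y. (c y)^2) has_integral iC2) {x0..x1}"
    unfolding iC2_def c_def by (rule integrable_integral[OF cc_sq_int])
  have hO: "((\<lambda>y. d y * c y) has_integral 0) {x0..x1}"
    unfolding d_def c_def x0_def x1_def by (rule ortho)
  have "((\<lambda>y. (d y)^2 + 2 * (d y * c y) + (c y)^2) has_integral (iD2 + 2 * 0 + iC2)) {x0..x1}"
    by (intro has_integral_add has_integral_mult_right hD hO hC)
  moreover have "(\<lambda>y. (d y)^2 + 2 * (d y * c y) + (c y)^2) = (\<lambda>y. (G y)^2)"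
    by (rule ext) (simp add: cGd power2_eq_square algebra_simps)
  ultimately have "((\<lambda>y. (G y)^2) has_integral (iD2 + iC2)) {x0..x1}" by simp
  then have split: "iG2 = iD2 + iC2" using hG by (metis has_integral_unique)
  have D0: "iD2 \<ge> 0" by (rule has_integral_nonneg[OF hD]) simp
  have C0: "iC2 \<ge> 0" by (rule has_integral_nonneg[OF hC]) simp
  have hPG: "((\<lambda>y. ((deriv ^^ Suc k) (hermite_interp k a b N g) y)^2) has_integral iD2) {x0..x1}"
  proof (rule has_integral_spike_finite[OF _ _ hD, of "{x0, x1}"])
    fix y assume y: "y \<in> {x0..x1} - {x0, x1}"
    then have yo: "y \<in> {a + real_of_int j * h <..< a + real_of_int (j+1) * h}" unfolding x0_def x1_def by auto
    show "((deriv ^^ Suc k) (hermite_interp k a b N g) y)^2 = (d y)^2"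
      using E6[OF open_cell(1)[OF yo], of g] open_cell(2)[OF yo] unfolding d_def by simp
  qed simp
  show "integral {x0..x1} (\<lambda>y. ((deriv ^^ Suc k) (hermite_interp k a b N g) y)^2) \<le> integral {x0..x1} (\<lambda>y. ((deriv ^^ Suc k) g y)^2)"
    using integral_unique[OF hPG] split C0 unfolding iG2_def G_def by simp
  define B where "B = (iC2 + h)/2"
  have B0: "B \<ge> 0" unfolding B_def using C0 h_pos by simp
  have hsq: "((\<lambda>y. ((c y)^2 + 1)/2) has_integral B) {x0..x1}"
  proof -
    have "((\<lambda>y. (c y)^2 + 1) has_integral (iC2 + Henstock_Kurzweil_Integration.content {x0..x1} *\<^sub>R 1)) {x0..x1}"
      by (intro has_integral_add hC has_integral_const_real)
    from has_integral_divide[OF this, of 2] show ?thesis unfolding B_def cI by simp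
  qed
  have sqi: "(\<lambda>x. (c x)^2) integrable_on {p..q}" for p q unfolding c_def by (rule cc_sq_int)
  have bk: "\<bar>cc j k y\<bar> \<le> B" if y: "y \<in> {x0..x1}" for y
  proof -
    have "(cc j (Suc k) has_integral (cc j k y - cc j k x0)) {x0..y}" by (rule cc_ftc) (use y in auto)
    then have "(c has_integral cc j k y) {x0..y}" using cc_end(1)[of k j] unfolding c_def x0_def by simp
    then have "\<bar>cc j k y\<bar> \<le> integral {x0..y} (\<lambda>x. ((c x)^2 + 1)/2)"
      by (rule integral_abs_le_sq[OF _ sqi]) (use y in simp)
    also have "\<dots> \<le> integral {x0..x1} (\<lambda>x. ((c x)^2 + 1)/2)"
    proof (rule integral_subset_le)
      show "{x0..y} \<subseteq> {x0..x1}" using y by auto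
      have "(\<lambda>x. (c x)^2 + 1) integrable_on {x0..y}"
        by (rule integrable_add[OF sqi integrable_const_ivl])
      then show "(\<lambda>x. ((c x)^2 + 1)/2) integrable_on {x0..y}" by (rule integrable_on_divide)
      show "(\<lambda>x. ((c x)^2 + 1)/2) integrable_on {x0..x1}" by (rule has_integral_integrable[OF hsq])
      show "\<forall>x\<in>{x0..x1}. 0 \<le> ((c x)^2 + 1)/2" by (simp add: add_nonneg_nonneg)
    qed
    also have "\<dots> = B" using hsq by (rule integral_unique)
    finally show ?thesis .
  qed
  have bl: "\<forall>y\<in>{x0..x1}. \<bar>cc j (k - n) y\<bar> \<le> h^n * B" if "n \<le> k" for n
    using that
  proof (induction n)
    case 0 then show ?case using bk by simp
  next
    case (Suc n)
    define l where "l = k - Suc n"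
    have l: "l < k" "Suc l = k - n" unfolding l_def using Suc.prems by auto
    have IH: "\<forall>y\<in>{x0..x1}. \<bar>cc j (Suc l) y\<bar> \<le> h^n * B" using Suc l by simp
    show ?case unfolding l_def[symmetric]
    proof
      fix y assume y: "y \<in> {x0..x1}"
      show "\<bar>cc j l y\<bar> \<le> h ^ Suc n * B"
      proof (cases "y = x0")
        case True
        then show ?thesis using cc_end(1)[of l j] l B0 h_pos unfolding x0_def by simp
      next
        case False
        with y have "x0 < y" by simp
        from MVT2[OF this, of "cc j l" "cc j (Suc l)"] cc_der[OF l(1)]
        obtain z where z: "x0 < z" "z < y" "cc j l y - cc j l x0 = (y - x0) * cc j (Suc l) z" by blast
        have "cc j l x0 = 0" using cc_end(1)[of l j] l unfolding x0_def by simp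
        with z have "\<bar>cc j l y\<bar> = \<bar>y - x0\<bar> * \<bar>cc j (Suc l) z\<bar>" by (simp add: abs_mult)
        also have "\<dots> \<le> h * (h^n * B)"
        proof (rule mult_mono)
          show "\<bar>y - x0\<bar> \<le> h" using y z x1 by simp
          show "\<bar>cc j (Suc l) z\<bar> \<le> h^n * B" using IH z y by simp
        qed (use h_pos in auto)
        finally show ?thesis by simp
      qed
    qed
  qed
  have b0: "\<bar>cc j 0 y\<bar> \<le> h^k * B" if "y \<in> {x0..x1}" for y using bl[of k] that by simp
  define ip where "ip = integral {x0..x1} (\<lambda>y. poly (hp g j) y)"
  define ig where "ig = integral {x0..x1} g"
  have hp: "((\<lambda>y. poly (hp g j) y) has_integral ip) {x0..x1}"
    unfolding ip_def by (rule integrable_integral, rule integrable_continuous_interval) (intro continuous_intros)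
  have "continuous_on UNIV g" using good_cont[OF gg, of 0] by simp
  then have hg: "(g has_integral ig) {x0..x1}" unfolding ig_def
    by (meson continuous_on_subset integrable_continuous_interval integrable_integral subset_UNIV)
  have hPg: "(hermite_interp k a b N g has_integral ip) {x0..x1}"
  proof (rule has_integral_spike_finite[OF _ _ hp, of "{}"])
    fix y assume "y \<in> {x0..x1} - {}"
    then show "hermite_interp k a b N g y = poly (hp g j) y"
      using E1[of 0 j y g] unfolding interp_eq x0_def x1_def by simp
  qed simp
  have hc0: "(cc j 0 has_integral (ig - ip)) {x0..x1}"
  proof -
    have "((\<lambda>y. g y - poly (hp g j) y) has_integral (ig - ip)) {x0..x1}" by (rule has_integral_diff[OF hg hp])
    moreover have "(\<lambda>y. g y - poly (hp g j) y) = cc j 0" by (rule ext) (simp add: cc_def)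
    ultimately show ?thesis by simp
  qed
  have "ig - ip \<le> Henstock_Kurzweil_Integration.content {x0..x1} *\<^sub>R (h^k * B)"
    by (rule has_integral_le[OF hc0 has_integral_const_real]) (use b0 in \<open>auto simp: abs_le_iff\<close>)
  moreover have "-(ig - ip) \<le> Henstock_Kurzweil_Integration.content {x0..x1} *\<^sub>R (h^k * B)"
    by (rule has_integral_le[OF has_integral_neg[OF hc0] has_integral_const_real]) (use b0 in \<open>auto simp: abs_le_iff\<close>)
  ultimately have "\<bar>ip - ig\<bar> \<le> h * (h^k * B)" unfolding cI by simp
  also have "\<dots> \<le> h^(Suc k) * ((iG2 + h)/2)"
    unfolding B_def using split D0 h_pos by (simp add: mult_left_mono)
  finally show "\<bar>integral {x0..x1} (hermite_interp k a b N g) - integral {x0..x1} g\<bar> \<le> h^(Suc k) * (integral {x0..x1} (\<lambda>y. ((deriv ^^ Suc k) g y)^2) + h)/2"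
    using integral_unique[OF hPg] unfolding ig_def iG2_def G_def by simp
qed

end
end

context grid begin

lemma sum_cells:
  fixes F :: "real \<Rightarrow> real"
  assumes "F integrable_on {a..b}"
  shows "integral {a..b} F = (\<Sum>j<N. integral {a + real_of_int (int j) * h .. a + real_of_int (int j + 1) * h} F)"
proof -
  have "n \<le> N \<Longrightarrow> integral {a .. a + real n * h} F = (\<Sum>j<n. integral {a + real_of_int (int j) * h .. a + real_of_int (int j + 1) * h} F)" for n
  proof (induction n)
    case 0 then show ?case by simp
  next
    case (Suc n)
    have sub: "{a .. a + real (Suc n) * h} \<subseteq> {a..b}"
    proof -
      have "real (Suc n) * h \<le> real N * h" using Suc.prems h_pos by (intro mult_right_mono) auto
      then show ?thesis using Nh by auto
    qed
    have int: "F integrable_on {a .. a + real (Suc n) * h}" by (rule integrable_on_subinterval[OF assms sub])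
    have "integral {a .. a + real n * h} F + integral {a + real n * h .. a + real (Suc n) * h} F = integral {a .. a + real (Suc n) * h} F"
      by (rule Henstock_Kurzweil_Integration.integral_combine[OF _ _ int]) (use h_pos in auto)
    moreover have "a + real_of_int (int n) * h = a + real n * h" "a + real_of_int (int n + 1) * h = a + real (Suc n) * h"
      by (simp_all add: algebra_simps)
    ultimately show ?case using Suc by (simp add: add.commute)
  qed
  from this[of N] show ?thesis using Nh by simp
qed

lemma step:
  assumes gg: "good \<sigma> g"
  shows "good a (hermite_interp k a b N g)" "E (hermite_interp k a b N g) \<le> E g"
    "\<bar>integral {a..b} (hermite_interp k a b N g) - integral {a..b} g\<bar> \<le> h^(Suc k) * (E g + (b - a))/2"
proof -
  let ?P = "hermite_interp k a b N g"
  show gP: "good a ?P" by (rule good_interp[OF gg])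
  let ?I = "\<lambda>j::nat. {a + real_of_int (int j) * h .. a + real_of_int (int j + 1) * h}"
  have EP: "E ?P = (\<Sum>j<N. integral (?I j) (\<lambda>y. ((deriv ^^ Suc k) ?P y)^2))"
    unfolding E_def by (rule sum_cells[OF good_sq_int[OF gP]])
  have Eg: "E g = (\<Sum>j<N. integral (?I j) (\<lambda>y. ((deriv ^^ Suc k) g y)^2))"
    unfolding E_def by (rule sum_cells[OF good_sq_int[OF gg]])
  show "E ?P \<le> E g" unfolding EP Eg
    by (rule sum_mono) (rule cell(1)[OF gg])
  have cP: "continuous_on UNIV ?P" using good_cont[OF gP, of 0] by simp
  have cg: "continuous_on UNIV g" using good_cont[OF gg, of 0] by simp
  have iP: "integral {a..b} ?P = (\<Sum>j<N. integral (?I j) ?P)"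
    by (rule sum_cells) (meson cP continuous_on_subset integrable_continuous_interval subset_UNIV)
  have ig: "integral {a..b} g = (\<Sum>j<N. integral (?I j) g)"
    by (rule sum_cells) (meson cg continuous_on_subset integrable_continuous_interval subset_UNIV)
  have "\<bar>integral {a..b} ?P - integral {a..b} g\<bar> = \<bar>\<Sum>j<N. integral (?I j) ?P - integral (?I j) g\<bar>"
    unfolding iP ig by (simp add: sum_subtractf)
  also have "\<dots> \<le> (\<Sum>j<N. \<bar>integral (?I j) ?P - integral (?I j) g\<bar>)" by (rule sum_abs)
  also have "\<dots> \<le> (\<Sum>j<N. h^(Suc k) * (integral (?I j) (\<lambda>y. ((deriv ^^ Suc k) g y)^2) + h)/2)"
    by (rule sum_mono) (rule cell(2)[OF gg])
  also have "\<dots> = h^(Suc k) * (E g + real N * h)/2"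
    unfolding Eg by (simp add: sum_distrib_left sum_divide_distrib[symmetric] sum.distrib algebra_simps)
  finally show "\<bar>integral {a..b} ?P - integral {a..b} g\<bar> \<le> h^(Suc k) * (E g + (b - a))/2" using Nh by simp
qed

end

lemma pow_le_max: "(0::real) < L \<Longrightarrow> n \<le> k \<Longrightarrow> L^n \<le> max 1 L ^ k"
proof -
  assume L: "0 < L" and nk: "n \<le> k"
  have "L^n \<le> (max 1 L)^n" by (rule power_mono) (use L in auto)
  also have "\<dots> \<le> (max 1 L)^k" by (rule power_increasing[OF nk]) simp
  finally show ?thesis .
qed

context grid begin

context
  fixes \<sigma> f assumes gg: "good \<sigma> f"
begin

lemma zero_exists:
  assumes "1 \<le> l" "l \<le> k"
  shows "\<exists>z\<in>{a..b}. (deriv ^^ l) f z = 0"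
proof -
  have d: "((deriv ^^ (l - 1)) f has_real_derivative (deriv ^^ l) f x) (at x)" for x
    using gg assms unfolding good_def by (metis Suc_diff_1 Suc_le_eq diff_less less_le_trans zero_less_one)
  from MVT2[OF ab, of "(deriv ^^ (l - 1)) f" "(deriv ^^ l) f"] d
  obtain z where z: "a < z" "z < b" "(deriv ^^ (l - 1)) f b - (deriv ^^ (l - 1)) f a = (b - a) * (deriv ^^ l) f z"
    by blast
  have "(deriv ^^ (l - 1)) f b = (deriv ^^ (l - 1)) f a"
    using good_periodic_deriv[OF gg, of "l - 1" a] by simp
  with z ab have "(deriv ^^ l) f z = 0" by simp
  with z show ?thesis by auto
qed

lemma hsqab: "((\<lambda>x. (((deriv ^^ Suc k) f x)^2 + 1)/2) has_integral (E f + (b - a))/2) {a..b}"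
proof -
  have "((\<lambda>x. ((deriv ^^ Suc k) f x)^2) has_integral E f) {a..b}"
    unfolding E_def by (rule integrable_integral[OF good_sq_int[OF gg]])
  then have "((\<lambda>x. ((deriv ^^ Suc k) f x)^2 + 1) has_integral (E f + Henstock_Kurzweil_Integration.content {a..b} *\<^sub>R 1)) {a..b}"
    by (intro has_integral_add has_integral_const_real)
  from has_integral_divide[OF this, of 2] show ?thesis using ab by simp
qed

lemma osc_k_aux:
  assumes "y \<le> x" "x \<in> {a..b}" "y \<in> {a..b}"
  shows "\<bar>(deriv ^^ k) f x - (deriv ^^ k) f y\<bar> \<le> (E f + (b - a))/2"
proof -
  have ftc: "((deriv ^^ Suc k) f has_integral ((deriv ^^ k) f x - (deriv ^^ k) f y)) {y..x}"
  proof (rule fundamental_theorem_of_calculus_interior_strong[of "{z \<in> {y..x}. \<exists>i::int. z = \<sigma> + real_of_int i * h}"])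
    show "finite {z \<in> {y..x}. \<exists>i::int. z = \<sigma> + real_of_int i * h}" by (rule finite_grid_points[OF h_pos])
    show "y \<le> x" by fact
    show "continuous_on {y..x} ((deriv ^^ k) f)" using good_cont[OF gg, of k] continuous_on_subset by blast
    fix z assume "z \<in> {y<..<x} - {z \<in> {y..x}. \<exists>i::int. z = \<sigma> + real_of_int i * h}"
    then have "\<forall>i::int. z \<noteq> \<sigma> + real_of_int i * h" by auto
    then show "((deriv ^^ k) f has_vector_derivative (deriv ^^ Suc k) f z) (at z)"
      using gg unfolding good_def has_real_derivative_iff_has_vector_derivative by blast
  qed
  have "\<bar>(deriv ^^ k) f x - (deriv ^^ k) f y\<bar> \<le> integral {y..x} (\<lambda>z. (((deriv ^^ Suc k) f z)^2 + 1)/2)"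
    by (rule integral_abs_le_sq[OF ftc good_sq_int[OF gg] assms(1)])
  also have "\<dots> \<le> integral {a..b} (\<lambda>z. (((deriv ^^ Suc k) f z)^2 + 1)/2)"
  proof (rule integral_subset_le)
    show "{y..x} \<subseteq> {a..b}" using assms by auto
    have "(\<lambda>z. ((deriv ^^ Suc k) f z)^2 + 1) integrable_on {y..x}"
      by (rule integrable_add[OF good_sq_int[OF gg] integrable_const_ivl])
    then show "(\<lambda>z. (((deriv ^^ Suc k) f z)^2 + 1)/2) integrable_on {y..x}" by (rule integrable_on_divide)
    show "(\<lambda>z. (((deriv ^^ Suc k) f z)^2 + 1)/2) integrable_on {a..b}" by (rule has_integral_integrable[OF hsqab])
    show "\<forall>z\<in>{a..b}. 0 \<le> (((deriv ^^ Suc k) f z)^2 + 1)/2" by (simp add: add_nonneg_nonneg)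
  qed
  also have "\<dots> = (E f + (b - a))/2" by (rule integral_unique[OF hsqab])
  finally show ?thesis .
qed

lemma osc_k:
  assumes "x \<in> {a..b}" "y \<in> {a..b}"
  shows "\<bar>(deriv ^^ k) f x - (deriv ^^ k) f y\<bar> \<le> (E f + (b - a))/2"
proof (cases "y \<le> x")
  case True then show ?thesis using osc_k_aux assms by blast
next
  case False
  then have "\<bar>(deriv ^^ k) f y - (deriv ^^ k) f x\<bar> \<le> (E f + (b - a))/2" using osc_k_aux assms by simp
  then show ?thesis by (simp add: abs_minus_commute)
qed

lemma osc_all:
  assumes "n \<le> k"
  shows "(\<forall>x\<in>{a..b}. \<forall>y\<in>{a..b}. \<bar>(deriv ^^ (k - n)) f x - (deriv ^^ (k - n)) f y\<bar> \<le> (b - a)^n * ((E f + (b - a))/2)) \<and>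
    (1 \<le> k - n \<longrightarrow> (\<forall>x\<in>{a..b}. \<bar>(deriv ^^ (k - n)) f x\<bar> \<le> (b - a)^n * ((E f + (b - a))/2)))"
  using assms
proof (induction n)
  case 0
  have o: "\<forall>x\<in>{a..b}. \<forall>y\<in>{a..b}. \<bar>(deriv ^^ k) f x - (deriv ^^ k) f y\<bar> \<le> (E f + (b - a))/2"
    using osc_k by blast
  moreover have "1 \<le> k \<longrightarrow> (\<forall>x\<in>{a..b}. \<bar>(deriv ^^ k) f x\<bar> \<le> (E f + (b - a))/2)"
  proof (intro impI ballI)
    fix x assume k1: "1 \<le> k" and x: "x \<in> {a..b}"
    from zero_exists[OF k1] obtain z where z: "z \<in> {a..b}" "(deriv ^^ k) f z = 0" by auto
    from o x z show "\<bar>(deriv ^^ k) f x\<bar> \<le> (E f + (b - a))/2" by fastforce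
  qed
  ultimately show ?case by simp
next
  case (Suc n)
  define l where "l = k - Suc n"
  have l: "l < k" "Suc l = k - n" "1 \<le> k - n" unfolding l_def using Suc.prems by auto
  define V where "V = (E f + (b - a))/2"
  have V0: "V \<ge> 0" unfolding V_def using E_nonneg[OF gg] ab by simp
  have IH: "\<forall>x\<in>{a..b}. \<bar>(deriv ^^ Suc l) f x\<bar> \<le> (b - a)^n * V"
    using Suc l unfolding V_def by simp
  have der: "((deriv ^^ l) f has_real_derivative (deriv ^^ Suc l) f x) (at x)" for x
    using gg l unfolding good_def by blast
  have aux: "\<bar>(deriv ^^ l) f x - (deriv ^^ l) f y\<bar> \<le> (b - a)^Suc n * V"
    if "y < x" "x \<in> {a..b}" "y \<in> {a..b}" for x y
  proof -
    from MVT2[OF that(1), of "(deriv ^^ l) f" "(deriv ^^ Suc l) f"] der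
    obtain z where z: "y < z" "z < x" "(deriv ^^ l) f x - (deriv ^^ l) f y = (x - y) * (deriv ^^ Suc l) f z" by blast
    have "\<bar>(deriv ^^ l) f x - (deriv ^^ l) f y\<bar> = \<bar>x - y\<bar> * \<bar>(deriv ^^ Suc l) f z\<bar>" using z by (simp add: abs_mult)
    also have "\<dots> \<le> (b - a) * ((b - a)^n * V)"
      by (rule mult_mono) (use that z IH V0 ab in auto)
    finally show ?thesis by simp
  qed
  have osc: "\<forall>x\<in>{a..b}. \<forall>y\<in>{a..b}. \<bar>(deriv ^^ l) f x - (deriv ^^ l) f y\<bar> \<le> (b - a)^Suc n * V"
  proof (intro ballI)
    fix x y assume x: "x \<in> {a..b}" and y: "y \<in> {a..b}"
    consider "y < x" | "x = y" | "x < y" by linarith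
    then show "\<bar>(deriv ^^ l) f x - (deriv ^^ l) f y\<bar> \<le> (b - a)^Suc n * V"
    proof cases
      case 1 then show ?thesis using aux x y by blast
    next
      case 2 then show ?thesis using V0 ab by simp
    next
      case 3 then show ?thesis using aux[OF 3 y x] by (simp add: abs_minus_commute)
    qed
  qed
  moreover have "1 \<le> l \<longrightarrow> (\<forall>x\<in>{a..b}. \<bar>(deriv ^^ l) f x\<bar> \<le> (b - a)^Suc n * V)"
  proof (intro impI ballI)
    fix x assume l1: "1 \<le> l" and x: "x \<in> {a..b}"
    from zero_exists[OF l1 less_imp_le[OF l(1)]] obtain z where z: "z \<in> {a..b}" "(deriv ^^ l) f z = 0" by auto
    from osc x z show "\<bar>(deriv ^^ l) f x\<bar> \<le> (b - a)^Suc n * V" by fastforce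
  qed
  ultimately show ?case unfolding l_def V_def by simp
qed

lemma pb:
  assumes "l \<le> k" "x \<in> {a..b}"
  shows "\<bar>(deriv ^^ l) f x\<bar> \<le> max 1 (b - a) ^ k * ((E f + (b - a))/2) + \<bar>integral {a..b} f\<bar> / (b - a)"
proof -
  define V where "V = (E f + (b - a))/2"
  have V0: "V \<ge> 0" unfolding V_def using E_nonneg[OF gg] ab by simp
  have L0: "b - a > 0" using ab by simp
  have q: "\<bar>integral {a..b} f\<bar> / (b - a) \<ge> 0" using L0 by simp
  show ?thesis
  proof (cases "l = 0")
    case False
    then have "1 \<le> k - (k - l)" "k - l \<le> k" "k - (k - l) = l" using assms by auto
    with osc_all[of "k - l"] assms have "\<bar>(deriv ^^ l) f x\<bar> \<le> (b - a)^(k - l) * V" unfolding V_def by auto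
    also have "\<dots> \<le> max 1 (b - a) ^ k * V" by (rule mult_right_mono[OF pow_le_max[OF L0] V0]) simp
    finally show ?thesis using q unfolding V_def by simp
  next
    case True
    have oscf: "\<forall>x\<in>{a..b}. \<forall>y\<in>{a..b}. \<bar>f x - f y\<bar> \<le> (b - a)^k * V"
      using osc_all[of k] unfolding V_def by simp
    have cf: "continuous_on UNIV f" using good_cont[OF gg, of 0] by simp
    define I where "I = integral {a..b} f"
    have hf: "(f has_integral I) {a..b}" unfolding I_def
      by (meson cf continuous_on_subset integrable_continuous_interval integrable_integral subset_UNIV)
    have hd: "((\<lambda>y. f x - f y) has_integral ((b - a) * f x - I)) {a..b}"
      using has_integral_diff[OF has_integral_const_real[of "f x" a b] hf] ab by simp
    have "(b - a) * f x - I \<le> Henstock_Kurzweil_Integration.content {a..b} *\<^sub>R ((b - a)^k * V)"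
      by (rule has_integral_le[OF hd has_integral_const_real]) (use oscf assms in \<open>auto simp: abs_le_iff\<close>)
    moreover have "-((b - a) * f x - I) \<le> Henstock_Kurzweil_Integration.content {a..b} *\<^sub>R ((b - a)^k * V)"
      by (rule has_integral_le[OF has_integral_neg[OF hd] has_integral_const_real]) (use oscf assms in \<open>auto simp: abs_le_iff\<close>)
    ultimately have "\<bar>(b - a) * f x - I\<bar> \<le> (b - a) * ((b - a)^k * V)" using ab by simp
    then have "(b - a) * \<bar>f x\<bar> \<le> (b - a) * ((b - a)^k * V) + \<bar>I\<bar>" by (simp add: abs_mult[symmetric])
    then have "\<bar>f x\<bar> \<le> (b - a)^k * V + \<bar>I\<bar> / (b - a)" using L0 by (simp add: field_simps)
    also have "\<dots> \<le> max 1 (b - a) ^ k * V + \<bar>I\<bar> / (b - a)"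
      using mult_right_mono[OF pow_le_max[OF L0 order_refl] V0] by simp
    finally show ?thesis using True unfolding V_def I_def by simp
  qed
qed

end
end

context grid begin

lemma jet_inv:
  assumes g0: "good a phi0"
  shows "(\<exists>\<sigma>. good \<sigma> (jet_scheme k a b N v dt phi0 m)) \<and> E (jet_scheme k a b N v dt phi0 m) \<le> E phi0 \<and>
    \<bar>integral {a..b} (jet_scheme k a b N v dt phi0 m)\<bar> \<le> \<bar>integral {a..b} phi0\<bar> + real m * (h^(Suc k) * (E phi0 + (b - a))/2)"
proof (induction m)
  case 0 then show ?case using g0 by auto
next
  case (Suc m)
  let ?f = "jet_scheme k a b N v dt phi0 m"
  let ?g = "\<lambda>x. ?f (x - v * dt)"
  from Suc obtain \<sigma> where gf: "good \<sigma> ?f" and Ef: "E ?f \<le> E phi0"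
    and If: "\<bar>integral {a..b} ?f\<bar> \<le> \<bar>integral {a..b} phi0\<bar> + real m * (h^(Suc k) * (E phi0 + (b - a))/2)" by blast
  have gg: "good (\<sigma> + v * dt) ?g" by (rule good_shift[OF gf])
  have Eg: "E ?g = E ?f" by (rule E_shift[OF gf])
  have Ig: "integral {a..b} ?g = integral {a..b} ?f" by (rule int_shift[OF gf])
  have js: "jet_scheme k a b N v dt phi0 (Suc m) = hermite_interp k a b N ?g" by simp
  note st = step[OF gg]
  have B: "h^(Suc k) * (E ?g + (b - a))/2 \<le> h^(Suc k) * (E phi0 + (b - a))/2"
    using Eg Ef h_pos by (simp add: mult_left_mono divide_right_mono)
  have A: "\<bar>integral {a..b} (hermite_interp k a b N ?g)\<bar> \<le> \<bar>integral {a..b} ?g\<bar> + h^(Suc k) * (E phi0 + (b - a))/2"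
    using st(3) B by linarith
  have eq: "real (Suc m) * (h^(Suc k) * (E phi0 + (b - a))/2) = real m * (h^(Suc k) * (E phi0 + (b - a))/2) + h^(Suc k) * (E phi0 + (b - a))/2"
    by (simp add: algebra_simps)
  have "\<bar>integral {a..b} (hermite_interp k a b N ?g)\<bar> \<le> \<bar>integral {a..b} phi0\<bar> + real (Suc m) * (h^(Suc k) * (E phi0 + (b - a))/2)"
    unfolding eq using A If Ig by linarith
  then show ?case unfolding js using st(1,2) Eg Ef by auto
qed

end

theorem mainTheorem9:
  fixes k :: nat and a b v T c :: real and phiIC :: "real \<Rightarrow> real"
  assumes ab: "a < b" and T: "T > 0" and c: "c > 0"
    and periodic: "\<forall>x. phiIC (x + (b - a)) = phiIC x"
    and smooth: "\<forall>l\<le>k. \<forall>x. ((deriv ^^ l) phiIC has_real_derivative (deriv ^^ Suc l) phiIC x) (at x)"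
    and cont: "continuous_on UNIV ((deriv ^^ Suc k) phiIC)"
  shows "\<exists>M. \<forall>N::nat. \<forall>dt::real. N \<ge> 1 \<longrightarrow> dt \<ge> c * ((b - a) / real N) ^ (k + 1) \<longrightarrow>
           (\<forall>m::nat. real m * dt \<le> T \<longrightarrow>
              (\<forall>l\<le>k. \<forall>x\<in>{a..b}. \<bar>(deriv ^^ l) (jet_scheme k a b N v dt phiIC m) x\<bar> \<le> M) \<and>
              (\<lambda>x. ((deriv ^^ (k + 1)) (jet_scheme k a b N v dt phiIC m) x)\<^sup>2) integrable_on {a..b} \<and>
              sqrt (integral {a..b} (\<lambda>x. ((deriv ^^ (k + 1)) (jet_scheme k a b N v dt phiIC m) x)\<^sup>2)) \<le> M)"
proof -
  define L where "L = b - a"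
  have L0: "L > 0" unfolding L_def using ab by simp
  define E0 where "E0 = integral {a..b} (\<lambda>x. ((deriv ^^ Suc k) phiIC x)^2)"
  define I0 where "I0 = \<bar>integral {a..b} phiIC\<bar>"
  define M where "M = max 1 L ^ k * ((E0 + L)/2) + (I0 + T / c * ((E0 + L)/2)) / L + sqrt E0"
  show ?thesis
  proof (intro exI[of _ M] allI impI)
    fix N :: nat and dt :: real and m :: nat
    assume N: "N \<ge> 1" and dt: "dt \<ge> c * ((b - a) / real N) ^ (k + 1)" and mT: "real m * dt \<le> T"
    interpret G: grid a b N k by standard (use ab N in auto)
    have g0: "G.good a phiIC"
      unfolding G.good_def
    proof (intro conjI allI impI)
      show "phiIC (x + (b - a)) = phiIC x" for x using periodic by blast
      show "((deriv ^^ l) phiIC has_real_derivative (deriv ^^ Suc l) phiIC x) (at x)" if "l < k" for l x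
        using smooth that by simp
      show "continuous_on UNIV ((deriv ^^ k) phiIC)"
        using smooth by (meson DERIV_isCont continuous_at_imp_continuous_on order_refl)
      show "((deriv ^^ k) phiIC has_real_derivative (deriv ^^ Suc k) phiIC x) (at x)" for x
        using smooth by simp
      show "cellwise a G.h ((deriv ^^ Suc k) phiIC)" by (rule cellwise_cont[OF cont])
    qed
    have E0e: "G.E phiIC = E0" unfolding G.E_def E0_def ..
    have E00: "E0 \<ge> 0" using G.E_nonneg[OF g0] E0e by simp
    from G.jet_inv[OF g0, of v dt m] obtain \<sigma> where
      gm: "G.good \<sigma> (jet_scheme k a b N v dt phiIC m)" and
      Em: "G.E (jet_scheme k a b N v dt phiIC m) \<le> E0" and
      Im: "\<bar>integral {a..b} (jet_scheme k a b N v dt phiIC m)\<bar> \<le> I0 + real m * (G.h^(Suc k) * (E0 + L)/2)"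
      unfolding E0e I0_def L_def by blast
    have hdt: "c * G.h^(Suc k) \<le> dt" using dt unfolding G.h_def by simp
    have "c * (real m * G.h^(Suc k)) \<le> real m * dt"
      using mult_left_mono[OF hdt, of "real m"] by (simp add: algebra_simps)
    also have "\<dots> \<le> T" by (rule mT)
    finally have mh: "real m * G.h^(Suc k) \<le> T / c" using c by (simp add: field_simps)
    have EL0: "(E0 + L)/2 \<ge> 0" using E00 L0 by simp
    have Im2: "\<bar>integral {a..b} (jet_scheme k a b N v dt phiIC m)\<bar> \<le> I0 + T / c * ((E0 + L)/2)"
    proof -
      have "real m * (G.h^(Suc k) * (E0 + L)/2) = (real m * G.h^(Suc k)) * ((E0 + L)/2)" by simp
      also have "\<dots> \<le> T / c * ((E0 + L)/2)" by (rule mult_right_mono[OF mh EL0])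
      finally show ?thesis using Im by linarith
    qed
    have sq0: "sqrt E0 \<ge> 0" using E00 by simp
    have I00: "I0 + T / c * ((E0 + L)/2) \<ge> 0" unfolding I0_def using T c EL0 by simp
    show "(\<forall>l\<le>k. \<forall>x\<in>{a..b}. \<bar>(deriv ^^ l) (jet_scheme k a b N v dt phiIC m) x\<bar> \<le> M) \<and>
          (\<lambda>x. ((deriv ^^ (k + 1)) (jet_scheme k a b N v dt phiIC m) x)\<^sup>2) integrable_on {a..b} \<and>
          sqrt (integral {a..b} (\<lambda>x. ((deriv ^^ (k + 1)) (jet_scheme k a b N v dt phiIC m) x)\<^sup>2)) \<le> M"
    proof (intro conjI allI impI ballI)
      fix l x assume l: "l \<le> k" and x: "x \<in> {a..b}"
      have "\<bar>(deriv ^^ l) (jet_scheme k a b N v dt phiIC m) x\<bar> \<le>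
          max 1 L ^ k * ((G.E (jet_scheme k a b N v dt phiIC m) + L)/2) + \<bar>integral {a..b} (jet_scheme k a b N v dt phiIC m)\<bar> / L"
        using G.pb[OF gm l x] unfolding L_def .
      also have "\<dots> \<le> max 1 L ^ k * ((E0 + L)/2) + (I0 + T / c * ((E0 + L)/2)) / L"
      proof (rule add_mono)
        show "max 1 L ^ k * ((G.E (jet_scheme k a b N v dt phiIC m) + L)/2) \<le> max 1 L ^ k * ((E0 + L)/2)"
          by (rule mult_left_mono) (use Em in auto)
        show "\<bar>integral {a..b} (jet_scheme k a b N v dt phiIC m)\<bar> / L \<le> (I0 + T / c * ((E0 + L)/2)) / L"
          by (rule divide_right_mono[OF Im2]) (use L0 in simp)
      qed
      also have "\<dots> \<le> M" unfolding M_def using sq0 by simp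
      finally show "\<bar>(deriv ^^ l) (jet_scheme k a b N v dt phiIC m) x\<bar> \<le> M" .
    next
      show "(\<lambda>x. ((deriv ^^ (k + 1)) (jet_scheme k a b N v dt phiIC m) x)\<^sup>2) integrable_on {a..b}"
        using G.good_sq_int[OF gm] by simp
    next
      have "sqrt (G.E (jet_scheme k a b N v dt phiIC m)) \<le> sqrt E0" using Em by simp
      moreover have "max 1 L ^ k * ((E0 + L)/2) \<ge> 0" using EL0 by simp
      moreover have "(I0 + T / c * ((E0 + L)/2)) / L \<ge> 0" using I00 L0 by simp
      ultimately have "sqrt (G.E (jet_scheme k a b N v dt phiIC m)) \<le> M" unfolding M_def by linarith
      then show "sqrt (integral {a..b} (\<lambda>x. ((deriv ^^ (k + 1)) (jet_scheme k a b N v dt phiIC m) x)\<^sup>2)) \<le> M"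
        unfolding G.E_def by simp
    qed
  qed
qed


end
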